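(* Let $G$ be an infinite supersoluble group with no elements of order $2$ (no involutions) such that every non-abelian subgroup $H$ of $G$ satisfies $C_G(H)\le H$. Then $G$ is abelian.
   Context: A group is supersoluble if it has a normal series (each term normal in the whole group) with cyclic factors. $C_G(H)$ denotes the centralizer of $H$ in $G$. *)

theory Defs
  imports "HOL-Algebra.Algebra"
begin

definition centralizer :: "('a, 'b) monoid_scheme \<Rightarrow> 'a set \<Rightarrow> 'a set" where
  "centralizer G H = {g \<in> carrier G. \<forall>h\<in>H. g \<otimes>\<^bsub>G\<^esub> h = h \<otimes>\<^bsub>G\<^esub> g}"

definition supersoluble :: "('a, 'b) monoid_scheme \<Rightarrow> bool" where
  "supersoluble G \<longleftrightarrow> (\<exists>Hs :: 'a set list.
      Hs \<noteq> [] \<and> hd Hs = {\<one>\<^bsub>G\<^esub>} \<and> last Hs = carrier G \<and>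
      (\<forall>i < length Hs. Hs ! i \<lhd> G) \<and>
      (\<forall>i. Suc i < length Hs \<longrightarrow> Hs ! i \<subseteq> Hs ! Suc i \<and>
           cyclic_group ((G\<lparr>carrier := Hs ! Suc i\<rparr>) Mod (Hs ! i))))"

end

theory Submission
  imports Defs
begin

definition inford :: "('a, 'b) monoid_scheme \<Rightarrow> 'a \<Rightarrow> bool" where
  "inford G x \<longleftrightarrow> (\<forall>n::int. x [^]\<^bsub>G\<^esub> n = \<one>\<^bsub>G\<^esub> \<longrightarrow> n = 0)"

context group begin

lemma inv_cancel1 [simp]: "a \<in> carrier G \<Longrightarrow> x \<in> carrier G \<Longrightarrow> inv a \<otimes> (a \<otimes> x) = x"
  by (simp add: m_assoc[symmetric])

lemma inv_cancel2 [simp]: "a \<in> carrier G \<Longrightarrow> x \<in> carrier G \<Longrightarrow> a \<otimes> (inv a \<otimes> x) = x"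
  by (simp add: m_assoc[symmetric])

lemma conj_cancel:
  assumes "a \<in> carrier G" "x \<in> carrier G" "y \<in> carrier G" "a \<otimes> x \<otimes> inv a = a \<otimes> y \<otimes> inv a"
  shows "x = y"
proof -
  have "inv a \<otimes> (a \<otimes> x \<otimes> inv a) \<otimes> a = inv a \<otimes> (a \<otimes> y \<otimes> inv a) \<otimes> a" using assms(4) by simp
  then show ?thesis using assms(1-3) by (simp add: m_assoc)
qed

lemma conj_hom: "b \<in> carrier G \<Longrightarrow> (\<lambda>x. b \<otimes> x \<otimes> inv b) \<in> hom G G"
  unfolding hom_def by (auto simp add: m_assoc)

lemma conj_pow:
  assumes "b \<in> carrier G" "x \<in> carrier G"
  shows "b \<otimes> x [^] (n::int) \<otimes> inv b = (b \<otimes> x \<otimes> inv b) [^] n"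
proof -
  interpret h: group_hom G G "\<lambda>x. b \<otimes> x \<otimes> inv b"
    by (simp add: assms(1) conj_hom group_hom_axioms_def group_hom_def is_group)
  show ?thesis using h.hom_int_pow[OF assms(2)] by simp
qed

lemma comm_inv:
  assumes "x \<in> carrier G" "y \<in> carrier G" "x \<otimes> y = y \<otimes> x"
  shows "inv x \<otimes> y = y \<otimes> inv x"
proof -
  have 1: "y \<otimes> x \<otimes> inv x = y" by (simp add: m_assoc assms(1,2))
  have "inv x \<otimes> y = inv x \<otimes> (y \<otimes> x \<otimes> inv x)" by (simp only: 1)
  also have "\<dots> = inv x \<otimes> (x \<otimes> y \<otimes> inv x)" by (simp only: assms(3))
  also have "\<dots> = y \<otimes> inv x" by (simp add: m_assoc[symmetric] assms(1,2))
  finally show ?thesis .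
qed

lemma comm_pow1:
  assumes "x \<in> carrier G" "y \<in> carrier G" "x \<otimes> y = y \<otimes> x"
  shows "x [^] (n::int) \<otimes> y = y \<otimes> x [^] n"
proof (cases n rule: int_cases)
  case (nonneg m)
  then show ?thesis using group_commutes_pow[OF assms(3) assms(1,2)] by (simp add: int_pow_int)
next
  case (neg m)
  have e: "x [^] n = inv (x [^] (Suc m))" using int_pow_neg_int[OF assms(1), of "Suc m"] neg by simp
  have "x [^] (Suc m) \<otimes> y = y \<otimes> x [^] (Suc m)" using group_commutes_pow[OF assms(3) assms(1,2)] .
  then show ?thesis unfolding e using comm_inv[of "x [^] (Suc m)" y] assms by simp
qed

lemma comm_pow2:
  assumes "x \<in> carrier G" "y \<in> carrier G" "x \<otimes> y = y \<otimes> x"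
  shows "x [^] (m::int) \<otimes> y [^] (n::int) = y [^] n \<otimes> x [^] m"
proof -
  have "y \<otimes> x [^] m = x [^] m \<otimes> y" using comm_pow1[OF assms] by simp
  then show ?thesis using comm_pow1[of y "x [^] m" n] assms by simp
qed

lemma key:
  assumes SC: "\<And>H. subgroup H G \<Longrightarrow> \<not>(\<forall>x\<in>H. \<forall>y\<in>H. x \<otimes> y = y \<otimes> x) \<Longrightarrow> centralizer G H \<subseteq> H"
  and S: "S \<subseteq> carrier G" "p \<in> S" "q \<in> S" "p \<otimes> q \<noteq> q \<otimes> p"
  and c: "c \<in> carrier G" "\<And>s. s \<in> S \<Longrightarrow> c \<otimes> s = s \<otimes> c"
  and T: "\<one> \<in> T" "S \<subseteq> T" "\<And>s. s \<in> S \<Longrightarrow> inv s \<in> T" "\<And>x y. x \<in> T \<Longrightarrow> y \<in> T \<Longrightarrow> x \<otimes> y \<in> T" "c \<notin> T"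
  shows False
proof -
  let ?H = "generate G S"
  have sub: "subgroup ?H G" using generate_is_subgroup S(1) .
  have HT: "x \<in> T" if "x \<in> ?H" for x using that
  proof (induction rule: generate.induct)
    case one then show ?case using T(1) by blast
  next
    case (incl h) then show ?case using T(2) by blast
  next
    case (inv h) then show ?case using T(3) by blast
  next
    case (eng h1 h2) then show ?case using T(4) by blast
  qed
  have cH: "c \<otimes> x = x \<otimes> c" if "x \<in> ?H" for x using that
  proof (induction rule: generate.induct)
    case one then show ?case using c(1) by simp
  next
    case (incl h) then show ?case using c(2) by blast
  next
    case (inv h)
    have h: "h \<in> carrier G" using inv S(1) by blast
    have "h \<otimes> c = c \<otimes> h" using c(2)[OF inv] by (rule sym)
    from comm_inv[OF h c(1) this] show ?case by (rule sym)
  next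
    case (eng h1 h2)
    have h: "h1 \<in> carrier G" "h2 \<in> carrier G" using subgroup.mem_carrier[OF sub eng(1)] subgroup.mem_carrier[OF sub eng(2)] by auto
    have "c \<otimes> (h1 \<otimes> h2) = (c \<otimes> h1) \<otimes> h2" using h c(1) by (simp add: m_assoc)
    also have "\<dots> = (h1 \<otimes> c) \<otimes> h2" by (simp only: eng(3))
    also have "\<dots> = h1 \<otimes> (c \<otimes> h2)" using h c(1) by (simp add: m_assoc)
    also have "\<dots> = h1 \<otimes> (h2 \<otimes> c)" by (simp only: eng(4))
    also have "\<dots> = (h1 \<otimes> h2) \<otimes> c" using h c(1) by (simp add: m_assoc)
    finally show ?case .
  qed
  have "p \<in> ?H" "q \<in> ?H" using S(2,3) by (auto intro: generate.incl)
  hence "\<not>(\<forall>x\<in>?H. \<forall>y\<in>?H. x \<otimes> y = y \<otimes> x)" using S(4) by blast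
  hence "centralizer G ?H \<subseteq> ?H" using SC[OF sub] by blast
  moreover have "c \<in> centralizer G ?H" unfolding centralizer_def using cH c(1) by blast
  ultimately show False using HT T(5) by blast
qed

lemma fin_closed_pow:
  assumes "finite T" "T \<subseteq> carrier G" "\<And>x y. x \<in> T \<Longrightarrow> y \<in> T \<Longrightarrow> x \<otimes> y \<in> T" "x \<in> T"
  shows "\<exists>n::nat. n > 0 \<and> x [^] n = \<one>"
proof -
  have x: "x \<in> carrier G" using assms by blast
  let ?f = "\<lambda>k::nat. x [^] (Suc k)"
  have inT: "?f k \<in> T" for k
  proof (induction k)
    case 0 then show ?case using assms(4) x by simp
  next
    case (Suc k)
    have "?f (Suc k) = ?f k \<otimes> x" by simp
    then show ?case using assms(3)[OF Suc assms(4)] by simp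
  qed
  have "\<not> inj_on ?f UNIV"
  proof
    assume "inj_on ?f UNIV"
    moreover have "?f ` UNIV \<subseteq> T" using inT by blast
    ultimately have "finite (UNIV :: nat set)" using inj_on_finite assms(1) by blast
    then show False by simp
  qed
  then obtain i j where ij: "i \<noteq> j" "?f i = ?f j" unfolding inj_on_def by blast
  have main: "\<exists>n::nat. n > 0 \<and> x [^] n = \<one>" if "i < j" "?f i = ?f j" for i j
  proof -
    have e: "Suc i + (j - i) = Suc j" using that(1) by simp
    have "x [^] (Suc j) = x [^] (Suc i) \<otimes> x [^] (j - i)"
      using nat_pow_mult[OF x, of "Suc i" "j - i"] e by simp
    then have "x [^] (Suc i) \<otimes> x [^] (j - i) = x [^] (Suc i)" using that(2) by simp
    then have "x [^] (j - i) = \<one>" using x by simp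
    then show ?thesis using that(1) by (intro exI[of _ "j - i"]) simp
  qed
  show ?thesis using ij main[of i j] main[of j i] by (cases "i < j") auto
qed

lemma conj_comp:
  assumes "a \<in> carrier G" "b \<in> carrier G" "f \<in> carrier G"
  shows "(a \<otimes> b) \<otimes> f \<otimes> inv (a \<otimes> b) = a \<otimes> (b \<otimes> f \<otimes> inv b) \<otimes> inv a"
  using assms by (simp add: inv_mult_group m_assoc)

lemma conj_nat_pow_closed:
  assumes "F \<subseteq> carrier G" "h \<in> carrier G" "\<And>f. f \<in> F \<Longrightarrow> h \<otimes> f \<otimes> inv h \<in> F" "f \<in> F"
  shows "h [^] (k::nat) \<otimes> f \<otimes> inv (h [^] k) \<in> F"
  using assms(4)
proof (induction k arbitrary: f)
  case 0 then show ?case using assms(1) by auto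
next
  case (Suc k)
  have f: "f \<in> carrier G" using Suc assms(1) by blast
  have "h [^] (Suc k) \<otimes> f \<otimes> inv (h [^] (Suc k)) = h [^] k \<otimes> (h \<otimes> f \<otimes> inv h) \<otimes> inv (h [^] k)"
    using conj_comp[of "h [^] k" h f] assms(2) f by simp
  then show ?case using Suc.IH[OF assms(3)[OF Suc.prems]] by simp
qed

lemma conj_pigeon:
  assumes "finite F" "F \<subseteq> carrier G" "h \<in> carrier G" "\<And>f. f \<in> F \<Longrightarrow> h \<otimes> f \<otimes> inv h \<in> F"
  shows "\<exists>p::nat. p > 0 \<and> (\<forall>f\<in>F. h [^] p \<otimes> f = f \<otimes> h [^] p)"
proof -
  let ?s = "\<lambda>k::nat. restrict (\<lambda>f. h [^] k \<otimes> f \<otimes> inv (h [^] k)) F"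
  have inS: "?s k \<in> F \<rightarrow>\<^sub>E F" for k
    unfolding restrict_PiE_iff using conj_nat_pow_closed[OF assms(2,3,4)] by blast
  have "\<not> inj_on ?s UNIV"
  proof
    assume "inj_on ?s UNIV"
    moreover have "?s ` UNIV \<subseteq> F \<rightarrow>\<^sub>E F" using inS by blast
    moreover have "finite (F \<rightarrow>\<^sub>E F)" using assms(1) by (simp add: finite_PiE)
    ultimately have "finite (UNIV :: nat set)" using inj_on_finite by blast
    then show False by simp
  qed
  then obtain i j where ij: "i \<noteq> j" "?s i = ?s j" unfolding inj_on_def by blast
  have main: "\<exists>p::nat. p > 0 \<and> (\<forall>f\<in>F. h [^] p \<otimes> f = f \<otimes> h [^] p)" if "i < j" "?s i = ?s j" for i j
  proof (intro exI[of _ "j - i"] conjI ballI)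
    show "j - i > 0" using that by simp
    fix f assume fF: "f \<in> F"
    have f: "f \<in> carrier G" using fF assms(2) by blast
    have eq: "h [^] i \<otimes> f \<otimes> inv (h [^] i) = h [^] j \<otimes> f \<otimes> inv (h [^] j)"
      using fun_cong[OF that(2), of f] fF by simp
    have e: "i + (j - i) = j" using that(1) by simp
    have hj: "h [^] j = h [^] i \<otimes> h [^] (j - i)" using nat_pow_mult[OF assms(3), of i "j - i"] e by simp
    have "h [^] j \<otimes> f \<otimes> inv (h [^] j) = (h [^] i \<otimes> h [^] (j - i)) \<otimes> f \<otimes> inv (h [^] i \<otimes> h [^] (j - i))"
      by (simp only: hj)
    also have "\<dots> = h [^] i \<otimes> (h [^] (j - i) \<otimes> f \<otimes> inv (h [^] (j - i))) \<otimes> inv (h [^] i)"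
      using conj_comp[of "h [^] i" "h [^] (j-i)" f] assms(3) f by blast
    finally have "h [^] i \<otimes> f \<otimes> inv (h [^] i) = h [^] i \<otimes> (h [^] (j - i) \<otimes> f \<otimes> inv (h [^] (j - i))) \<otimes> inv (h [^] i)"
      using eq by simp
    moreover have "h [^] i \<in> carrier G" "h [^] (j - i) \<otimes> f \<otimes> inv (h [^] (j - i)) \<in> carrier G"
      using assms(3) f by auto
    ultimately have "f = h [^] (j - i) \<otimes> f \<otimes> inv (h [^] (j - i))" using conj_cancel f by blast
    then have "f \<otimes> h [^] (j - i) = (h [^] (j - i) \<otimes> f \<otimes> inv (h [^] (j - i))) \<otimes> h [^] (j - i)"
      by (rule arg_cong)
    also have "\<dots> = h [^] (j - i) \<otimes> f" using assms(3) f by (simp add: m_assoc)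
    finally have "f \<otimes> h [^] (j - i) = h [^] (j - i) \<otimes> f" .
    then show "h [^] (j - i) \<otimes> f = f \<otimes> h [^] (j - i)" by simp
  qed
  show ?thesis
  proof (cases "i < j")
    case True show ?thesis using main[OF True ij(2)] by blast
  next
    case False then have "j < i" using ij(1) by simp
    then show ?thesis using main[OF _ ij(2)[symmetric]] by blast
  qed
qed

lemma conj_uncancel: "a \<in> carrier G \<Longrightarrow> v \<in> carrier G \<Longrightarrow> inv a \<otimes> (a \<otimes> v \<otimes> inv a) \<otimes> a = v"
  by (simp add: m_assoc)

lemma conj_move: "k \<in> carrier G \<Longrightarrow> x \<in> carrier G \<Longrightarrow> k \<otimes> x = (k \<otimes> x \<otimes> inv k) \<otimes> k"
  by (simp add: m_assoc)

lemma conj_inv: "k \<in> carrier G \<Longrightarrow> x \<in> carrier G \<Longrightarrow> k \<otimes> inv x \<otimes> inv k = inv (k \<otimes> x \<otimes> inv k)"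
  by (simp add: inv_mult_group m_assoc)

lemma pow2_int: "x \<in> carrier G \<Longrightarrow> x [^] (2::nat) = x [^] (2::int)"
  by (metis int_pow_int of_nat_numeral)

lemma odd_pow_one:
  assumes NI: "\<And>x. x \<in> carrier G \<Longrightarrow> x [^] (2::nat) = \<one> \<Longrightarrow> x = \<one>"
  and h: "h \<in> carrier G"
  shows "h [^] (e::int) = \<one> \<Longrightarrow> e \<noteq> 0 \<Longrightarrow> \<exists>k::int. odd k \<and> h [^] k = \<one>"
proof (induction "nat \<bar>e\<bar>" arbitrary: e rule: less_induct)
  case less
  show ?case
  proof (cases "odd e")
    case True then show ?thesis using less.prems by blast
  next
    case False
    then obtain e' where e': "e = 2 * e'" by (metis evenE)
    have ne: "e' \<noteq> 0" using e' less.prems(2) by simp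
    have "(h [^] e') [^] (2::nat) = h [^] e" using h e' by (simp add: pow2_int int_pow_pow mult.commute)
    then have "h [^] e' = \<one>" using NI[of "h [^] e'"] h less.prems(1) by simp
    moreover have "nat \<bar>e'\<bar> < nat \<bar>e\<bar>" using e' ne by simp
    ultimately show ?thesis using less.hyps[of e'] ne by blast
  qed
qed

lemma inv_conj_nat:
  assumes "h \<in> carrier G" "w \<in> carrier G" "h \<otimes> w \<otimes> inv h = inv w"
  shows "h [^] (n::nat) \<otimes> w \<otimes> inv (h [^] n) = (if even n then w else inv w)"
proof (induction n)
  case 0 then show ?case using assms by simp
next
  case (Suc n)
  have "h [^] (Suc n) \<otimes> w \<otimes> inv (h [^] (Suc n)) = h [^] n \<otimes> (h \<otimes> w \<otimes> inv h) \<otimes> inv (h [^] n)"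
    using conj_comp[of "h [^] n" h w] assms by simp
  also have "\<dots> = h [^] n \<otimes> inv w \<otimes> inv (h [^] n)" using assms(3) by simp
  also have "\<dots> = inv (h [^] n \<otimes> w \<otimes> inv (h [^] n))" using conj_inv assms by simp
  also have "\<dots> = inv (if even n then w else inv w)" using Suc by simp
  also have "\<dots> = (if even (Suc n) then w else inv w)" using assms by simp
  finally show ?case .
qed

lemma inv_conj_int:
  assumes "h \<in> carrier G" "w \<in> carrier G" "h \<otimes> w \<otimes> inv h = inv w"
  shows "h [^] (m::int) \<otimes> w \<otimes> inv (h [^] m) = (if even m then w else inv w)"
proof (cases m rule: int_cases)
  case (nonneg n)
  then show ?thesis using inv_conj_nat[OF assms, of n] by (simp add: int_pow_int)
next
  case (neg n)
  let ?a = "h [^] (Suc n)"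
  have a: "?a \<in> carrier G" using assms by simp
  have hm: "h [^] m = inv ?a" using neg int_pow_neg_int[OF assms(1), of "Suc n"] by simp
  have P: "?a \<otimes> w \<otimes> inv ?a = (if even (Suc n) then w else inv w)" using inv_conj_nat[OF assms] .
  have Q: "?a \<otimes> (if even (Suc n) then w else inv w) \<otimes> inv ?a = w"
  proof (cases "even (Suc n)")
    case True then show ?thesis using P by simp
  next
    case False
    then have "?a \<otimes> inv w \<otimes> inv ?a = inv (?a \<otimes> w \<otimes> inv ?a)" using conj_inv a assms by simp
    then show ?thesis using P False assms by simp
  qed
  have "inv ?a \<otimes> w \<otimes> inv (inv ?a) = inv ?a \<otimes> (?a \<otimes> (if even (Suc n) then w else inv w) \<otimes> inv ?a) \<otimes> ?a"
    using Q a by simp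
  also have "\<dots> = (if even (Suc n) then w else inv w)" using conj_uncancel[OF a, of "if even (Suc n) then w else inv w"] assms by simp
  finally show ?thesis using hm neg by simp
qed

lemma inv_conj_pow:
  assumes "h \<in> carrier G" "w \<in> carrier G" "h \<otimes> w \<otimes> inv h = inv w"
  shows "h [^] (m::int) \<otimes> w [^] (a::int) \<otimes> inv (h [^] m) = w [^] (if even m then a else - a)"
proof -
  have "h [^] m \<otimes> w [^] a \<otimes> inv (h [^] m) = (h [^] m \<otimes> w \<otimes> inv (h [^] m)) [^] a"
    using conj_pow assms by simp
  also have "\<dots> = (if even m then w else inv w) [^] a" using inv_conj_int[OF assms] by simp
  also have "\<dots> = w [^] (if even m then a else - a)" using assms by (simp add: int_pow_inv int_pow_neg)
  finally show ?thesis .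
qed

lemma self_inv_contra:
  assumes "w \<in> carrier G" "inford G w" "w = inv w"
  shows False
proof -
  have "w [^] (2::int) = w \<otimes> w" using assms(1) by (simp add: int_pow_mult[of w 1 1, simplified])
  also have "\<dots> = \<one>" using assms(1,3) by (metis r_inv)
  finally show False using assms(2) unfolding inford_def by fastforce
qed

lemma no_inversion:
  assumes SC: "\<And>H. subgroup H G \<Longrightarrow> \<not>(\<forall>x\<in>H. \<forall>y\<in>H. x \<otimes> y = y \<otimes> x) \<Longrightarrow> centralizer G H \<subseteq> H"
  and NI: "\<And>x. x \<in> carrier G \<Longrightarrow> x [^] (2::nat) = \<one> \<Longrightarrow> x = \<one>"
  and h: "h \<in> carrier G" and w: "w \<in> carrier G" "inford G w"
  and hw: "h \<otimes> w \<otimes> inv h = inv w"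
  shows False
proof -
  define T where "T = {w [^] (a::int) \<otimes> h [^] (3 * (b::int)) | a b. True}"
  let ?k = "h [^] (3::int)"
  let ?c = "h [^] (2::int)"
  have Tc: "w [^] (a::int) \<otimes> h [^] (3 * (b::int)) \<in> T" for a b unfolding T_def by blast
  have closed: "x \<otimes> y \<in> T" if xT: "x \<in> T" and yT: "y \<in> T" for x y
  proof -
    obtain a b :: int where x: "x = w [^] a \<otimes> h [^] (3 * b)" using xT unfolding T_def by blast
    obtain a' b' :: int where y: "y = w [^] a' \<otimes> h [^] (3 * b')" using yT unfolding T_def by blast
    let ?a'' = "if even (3 * b) then a' else - a'"
    have cj: "h [^] (3 * b) \<otimes> w [^] a' = w [^] ?a'' \<otimes> h [^] (3 * b)"
      using conj_move[of "h [^] (3 * b)" "w [^] a'"] inv_conj_pow[OF h w(1) hw, of "3 * b" a'] h w by simp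
    have "x \<otimes> y = w [^] a \<otimes> (h [^] (3 * b) \<otimes> w [^] a') \<otimes> h [^] (3 * b')"
      using x y h w by (simp add: m_assoc)
    also have "\<dots> = w [^] a \<otimes> (w [^] ?a'' \<otimes> h [^] (3 * b)) \<otimes> h [^] (3 * b')" using cj by simp
    also have "\<dots> = (w [^] a \<otimes> w [^] ?a'') \<otimes> (h [^] (3 * b) \<otimes> h [^] (3 * b'))"
      using h w by (simp add: m_assoc)
    also have "\<dots> = w [^] (a + ?a'') \<otimes> h [^] (3 * (b + b'))"
      using h w by (simp add: int_pow_mult distrib_left)
    finally show ?thesis by (simp only: Tc)
  qed
  have c_w: "?c \<otimes> w = w \<otimes> ?c"
  proof -
    have "?c \<otimes> w \<otimes> inv ?c = w" using inv_conj_int[OF h w(1) hw, of 2] by simp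
    then show ?thesis using conj_move[of ?c w] h w by simp
  qed
  have c_k: "?c \<otimes> ?k = ?k \<otimes> ?c" using h by (simp add: int_pow_mult[symmetric] add.commute)
  have nc: "w \<otimes> ?k \<noteq> ?k \<otimes> w"
  proof
    assume eq: "w \<otimes> ?k = ?k \<otimes> w"
    have "?k \<otimes> w \<otimes> inv ?k = inv w" using inv_conj_int[OF h w(1) hw, of 3] by simp
    moreover have "?k \<otimes> w \<otimes> inv ?k = w" using eq[symmetric] h w by (simp add: m_assoc)
    ultimately show False using self_inv_contra[OF w] by simp
  qed
  have cT: "?c \<notin> T"
  proof
    assume "?c \<in> T"
    then obtain a b :: int where ab: "?c = w [^] a \<otimes> h [^] (3 * b)" unfolding T_def by blast
    have wa: "w [^] a = h [^] (2 - 3 * b)"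
    proof -
      have "?c \<otimes> inv (h [^] (3 * b)) = w [^] a" using ab h w by (simp add: m_assoc)
      then show ?thesis using int_pow_diff[OF h, of 2 "3 * b"] by simp
    qed
    have "h \<otimes> w [^] a \<otimes> inv h = w [^] (- a)"
      using inv_conj_pow[OF h w(1) hw, of 1 a] h by simp
    moreover have "h \<otimes> w [^] a \<otimes> inv h = w [^] a"
    proof -
      have "h \<otimes> h [^] (2 - 3 * b) = h [^] (2 - 3 * b) \<otimes> h"
        using comm_pow1[OF h h refl, of "2 - 3 * b"] by simp
      then show ?thesis unfolding wa using h by (simp add: m_assoc)
    qed
    ultimately have ea: "w [^] a = w [^] (- a)" by simp
    have "w [^] (a + a) = w [^] a \<otimes> w [^] a" by (rule int_pow_mult[OF w(1)])
    also have "\<dots> = w [^] (- a) \<otimes> w [^] a" by (subst (1) ea) (rule refl)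
    also have "\<dots> = w [^] (- a + a)" by (rule int_pow_mult[OF w(1), symmetric])
    also have "\<dots> = \<one>" by simp
    finally have "w [^] (a + a) = \<one>" .
    then have "a = 0" using w(2) unfolding inford_def by fastforce
    then have h1: "h [^] (2 - 3 * b) = \<one>" using wa by simp
    have ne: "2 - 3 * b \<noteq> 0" by presburger
    have ex: "\<exists>k::int. odd k \<and> h [^] k = \<one>" by (rule odd_pow_one[OF NI h h1 ne])
    then obtain k :: int where k: "odd k" "h [^] k = \<one>" by blast
    have "h [^] k \<otimes> w \<otimes> inv (h [^] k) = inv w" using inv_conj_int[OF h w(1) hw, of k] k(1) by (simp only: if_False)
    then have "w = inv w" unfolding k(2) using w(1) by simp
    then show False using self_inv_contra[OF w] by blast
  qed
  show False
  proof (rule key[OF SC, of "{w, ?k}" w ?k ?c T])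
    show "{w, ?k} \<subseteq> carrier G" using h w by simp
    show "w \<in> {w, ?k}" "?k \<in> {w, ?k}" by auto
    show "w \<otimes> ?k \<noteq> ?k \<otimes> w" by (rule nc)
    show "?c \<in> carrier G" using h by simp
    show "?c \<otimes> s = s \<otimes> ?c" if "s \<in> {w, ?k}" for s using that c_w c_k by blast
    show "\<one> \<in> T" using Tc[of 0 0] h w by simp
    show "{w, ?k} \<subseteq> T" using Tc[of 1 0] Tc[of 0 1] h w by simp
    show "inv s \<in> T" if "s \<in> {w, ?k}" for s
    proof -
      have e1: "inv w = w [^] (-1::int) \<otimes> h [^] (3 * (0::int))" using h w by (simp add: int_pow_neg)
      have e2: "inv ?k = w [^] (0::int) \<otimes> h [^] (3 * (-1::int))" using h w by (simp add: int_pow_neg)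
      have "inv w \<in> T" unfolding e1 by (rule Tc)
      moreover have "inv ?k \<in> T" unfolding e2 by (rule Tc)
      ultimately show ?thesis using that by blast
    qed
    show "x \<otimes> y \<in> T" if "x \<in> T" "y \<in> T" for x y using closed that .
    show "?c \<notin> T" by (rule cT)
  qed
qed

lemma inford_nat: "inford G x \<Longrightarrow> x \<in> carrier G \<Longrightarrow> x [^] (n::nat) = \<one> \<Longrightarrow> n = 0"
  unfolding inford_def by (metis int_pow_int of_nat_eq_0_iff)

lemma conj_int_pow_closed:
  assumes F: "F \<subseteq> carrier G" "finite F" and h: "h \<in> carrier G" "\<And>f. f \<in> F \<Longrightarrow> h \<otimes> f \<otimes> inv h \<in> F"
  shows "\<And>m f. f \<in> F \<Longrightarrow> h [^] (m::int) \<otimes> f \<otimes> inv (h [^] m) \<in> F"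
proof -
  let ?s = "\<lambda>f. h \<otimes> f \<otimes> inv h"
  have sub: "?s ` F \<subseteq> F" using h(2) by blast
  have inj: "inj_on ?s F"
  proof (rule inj_onI)
    fix x y assume "x \<in> F" "y \<in> F" "?s x = ?s y"
    then show "x = y" using conj_cancel[OF h(1), of x y] F(1) by blast
  qed
  have eqF: "?s ` F = F" using endo_inj_surj[OF F(2) sub inj] .
  have hinv: "inv h \<otimes> f \<otimes> inv (inv h) \<in> F" if "f \<in> F" for f
  proof -
    have "f \<in> ?s ` F" using that eqF by simp
    then obtain f' where f': "f' \<in> F" "f = ?s f'" by (rule imageE) simp
    have f'c: "f' \<in> carrier G" using f'(1) F(1) by blast
    have "inv h \<otimes> f \<otimes> inv (inv h) = inv h \<otimes> (h \<otimes> f' \<otimes> inv h) \<otimes> h" unfolding f'(2) using h(1) by simp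
    also have "\<dots> = f'" by (rule conj_uncancel[OF h(1) f'c])
    finally show ?thesis using f'(1) by simp
  qed
  fix m :: int and f assume f: "f \<in> F"
  show "h [^] m \<otimes> f \<otimes> inv (h [^] m) \<in> F"
  proof (cases m rule: int_cases)
    case (nonneg n)
    then show ?thesis using conj_nat_pow_closed[OF F(1) h f] by (simp add: int_pow_int)
  next
    case (neg n)
    have "h [^] m = inv (h [^] (Suc n))" by (simp only: neg int_pow_neg_int[OF h(1)])
    then have e: "h [^] m = (inv h) [^] (Suc n)" using nat_pow_inv[OF h(1), of "Suc n"] by simp
    show ?thesis unfolding e by (rule conj_nat_pow_closed[OF F(1) inv_closed[OF h(1)] hinv f])
  qed
qed

lemma gp:
  assumes SC: "\<And>H. subgroup H G \<Longrightarrow> \<not>(\<forall>x\<in>H. \<forall>y\<in>H. x \<otimes> y = y \<otimes> x) \<Longrightarrow> centralizer G H \<subseteq> H"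
  and u: "u \<in> carrier G" "inford G u" "\<And>x. x \<in> carrier G \<Longrightarrow> u \<otimes> x = x \<otimes> u"
  and F: "subgroup F G" "finite F"
  and h: "h \<in> carrier G" "\<And>f. f \<in> F \<Longrightarrow> h \<otimes> f \<otimes> inv h \<in> F"
  and f0: "f0 \<in> F" "h \<otimes> f0 \<noteq> f0 \<otimes> h"
  shows False
proof -
  have Fc: "F \<subseteq> carrier G" using F(1) subgroup.subset by blast
  have conjF: "h [^] (m::int) \<otimes> f \<otimes> inv (h [^] m) \<in> F" if "f \<in> F" for m f
    using conj_int_pow_closed[OF Fc F(2) h that] .
  have f0c: "f0 \<in> carrier G" using f0 Fc by blast
  define T where "T j = {h [^] ((j::int) * s) \<otimes> f | s f. f \<in> F}" for j
  have Tc: "h [^] (j * s) \<otimes> f \<in> T j" if "f \<in> F" for j s f unfolding T_def using that by blast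
  have Tclosed: "x \<otimes> y \<in> T j" if xT: "x \<in> T j" and yT: "y \<in> T j" for j x y
  proof -
    obtain s f where x: "x = h [^] (j * s) \<otimes> f" "f \<in> F" using xT unfolding T_def by blast
    obtain s' f' where y: "y = h [^] (j * s') \<otimes> f'" "f' \<in> F" using yT unfolding T_def by blast
    let ?g = "h [^] (j * s')"
    have fc: "f \<in> carrier G" "f' \<in> carrier G" using x y Fc by blast+
    have g: "?g \<in> carrier G" using h by simp
    have f2: "inv ?g \<otimes> f \<otimes> ?g \<in> F"
    proof -
      have "inv ?g \<otimes> f \<otimes> ?g = h [^] (- (j * s')) \<otimes> f \<otimes> inv (h [^] (- (j * s')))"
        using h by (simp add: int_pow_neg)
      then show ?thesis using conjF[OF x(2)] by simp
    qed
    have "x \<otimes> y = h [^] (j * s) \<otimes> (f \<otimes> ?g) \<otimes> f'" using x y fc g h by (simp add: m_assoc)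
    also have "\<dots> = h [^] (j * s) \<otimes> (?g \<otimes> (inv ?g \<otimes> f \<otimes> ?g)) \<otimes> f'"
      using fc g by (simp add: m_assoc)
    also have "\<dots> = (h [^] (j * s) \<otimes> ?g) \<otimes> ((inv ?g \<otimes> f \<otimes> ?g) \<otimes> f')"
      using fc g h by (simp add: m_assoc)
    also have "\<dots> = h [^] (j * (s + s')) \<otimes> ((inv ?g \<otimes> f \<otimes> ?g) \<otimes> f')"
      using h by (simp add: int_pow_mult distrib_left)
    finally show ?thesis using Tc[of "(inv ?g \<otimes> f \<otimes> ?g) \<otimes> f'" j "s + s'"] subgroup.m_closed[OF F(1) f2 y(2)] by simp
  qed
  have T1: "\<one> \<in> T j" for j using Tc[of "\<one>" j 0] subgroup.one_closed[OF F(1)] by simp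
  have TF: "f \<in> T j" if "f \<in> F" for j f using Tc[of f j 0] that Fc by auto
  have Tinv: "inv f \<in> T j" if "f \<in> F" for j f using TF[of "inv f"] subgroup.m_inv_closed[OF F(1) that] by simp
  have Th: "h [^] j \<in> T j" "inv (h [^] j) \<in> T j" for j
  proof -
    show "h [^] j \<in> T j" using Tc[of "\<one>" j 1] subgroup.one_closed[OF F(1)] h by simp
    show "inv (h [^] j) \<in> T j" using Tc[of "\<one>" j "-1"] subgroup.one_closed[OF F(1)] h by (simp add: int_pow_neg)
  qed
  show False
  proof (cases "inford G h")
    case True
    obtain p :: nat where p: "p > 0" "\<And>f. f \<in> F \<Longrightarrow> h [^] p \<otimes> f = f \<otimes> h [^] p"
      using conj_pigeon[OF F(2) Fc h] by blast
    define P where "P = int p"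
    have hP: "h [^] P = h [^] p" unfolding P_def by (simp add: int_pow_int)
    let ?j = "P + 1"
    let ?c = "h [^] P"
    have hj: "h [^] ?j = ?c \<otimes> h" using h by (simp add: int_pow_mult)
    show False
    proof (rule key[OF SC, of "insert (h [^] ?j) F" "h [^] ?j" f0 ?c "T ?j"])
      show "insert (h [^] ?j) F \<subseteq> carrier G" using Fc h by simp
      show "h [^] ?j \<in> insert (h [^] ?j) F" "f0 \<in> insert (h [^] ?j) F" using f0 by auto
      show "h [^] ?j \<otimes> f0 \<noteq> f0 \<otimes> h [^] ?j"
      proof
        assume eq: "h [^] ?j \<otimes> f0 = f0 \<otimes> h [^] ?j"
        have "?c \<otimes> (h \<otimes> f0) = ?c \<otimes> h \<otimes> f0" using h f0c by (simp add: m_assoc)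
        also have "\<dots> = f0 \<otimes> (?c \<otimes> h)" using eq unfolding hj .
        also have "\<dots> = (f0 \<otimes> ?c) \<otimes> h" using h f0c by (simp add: m_assoc)
        also have "\<dots> = (?c \<otimes> f0) \<otimes> h" unfolding hP using p(2)[OF f0(1)] by simp
        also have "\<dots> = ?c \<otimes> (f0 \<otimes> h)" using h f0c by (simp add: m_assoc)
        finally have "h \<otimes> f0 = f0 \<otimes> h" using h f0c by simp
        then show False using f0(2) by simp
      qed
      show "?c \<in> carrier G" using h by simp
      show "?c \<otimes> s = s \<otimes> ?c" if "s \<in> insert (h [^] ?j) F" for s
      proof (cases "s = h [^] ?j")
        case True then show ?thesis using h by (simp add: int_pow_mult[symmetric] add.commute)
      next
        case False then have "s \<in> F" using that by simp
        then show ?thesis unfolding hP using p(2) by simp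
      qed
      show "\<one> \<in> T ?j" by (rule T1)
      show "insert (h [^] ?j) F \<subseteq> T ?j" using Th TF by blast
      show "inv s \<in> T ?j" if "s \<in> insert (h [^] ?j) F" for s using that Th Tinv by blast
      show "x \<otimes> y \<in> T ?j" if "x \<in> T ?j" "y \<in> T ?j" for x y using Tclosed that by blast
      show "?c \<notin> T ?j"
      proof
        assume "?c \<in> T ?j"
        then obtain s f where sf: "?c = h [^] (?j * s) \<otimes> f" "f \<in> F" unfolding T_def by blast
        have fc: "f \<in> carrier G" using sf Fc by blast
        have "f = inv (h [^] (?j * s)) \<otimes> ?c" using sf h fc by simp
        also have "\<dots> = h [^] (- (?j * s)) \<otimes> h [^] P" using h by (simp add: int_pow_neg)
        also have "\<dots> = h [^] (- (?j * s) + P)" by (rule int_pow_mult[OF h(1), symmetric])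
        also have "\<dots> = h [^] (P - ?j * s)" by (simp add: algebra_simps)
        finally have fe: "f = h [^] (P - ?j * s)" .
        obtain n :: nat where n: "n > 0" "f [^] n = \<one>"
          using fin_closed_pow[OF F(2) Fc _ sf(2)] subgroup.m_closed[OF F(1)] by blast
        have "h [^] ((P - ?j * s) * int n) = \<one>" using n(2) fe h by (simp add: int_pow_pow int_pow_int[symmetric])
        then have "(P - ?j * s) * int n = 0" using True unfolding inford_def by blast
        then have eqP: "P = (P + 1) * s" using n(1) by simp
        have Ppos: "P > 0" using p(1) unfolding P_def by simp
        show False
        proof (cases "s \<le> 0")
          case True
          then have "(P + 1) * s \<le> 0" using Ppos by (simp add: mult_nonneg_nonpos)
          then show False using eqP Ppos by simp
        next
          case False
          then have "(P + 1) * 1 \<le> (P + 1) * s" using Ppos by (intro mult_left_mono) auto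
          then show False using eqP by simp
        qed
      qed
    qed
  next
    case False
    then obtain e0 :: int where e0: "e0 \<noteq> 0" "h [^] e0 = \<one>" unfolding inford_def by blast
    define e where "e = \<bar>e0\<bar>"
    have e: "e > 0" "h [^] e = \<one>" using e0 h unfolding e_def by (auto simp: abs_if int_pow_neg)
    have Tsub: "T 1 \<subseteq> (\<lambda>(s, f). h [^] s \<otimes> f) ` ({0..<e} \<times> F)"
    proof
      fix x assume "x \<in> T 1"
      then obtain s f where x0: "x = h [^] ((1::int) * s) \<otimes> f" "f \<in> F" unfolding T_def by blast
      then have x: "x = h [^] s \<otimes> f" "f \<in> F" by simp_all
      have "h [^] s = h [^] (e * (s div e) + s mod e)" by simp
      also have "\<dots> = h [^] (e * (s div e)) \<otimes> h [^] (s mod e)" by (rule int_pow_mult[OF h(1)])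
      also have "\<dots> = (h [^] e) [^] (s div e) \<otimes> h [^] (s mod e)" by (simp add: int_pow_pow h(1))
      also have "\<dots> = h [^] (s mod e)" using e h by simp
      finally have "x = h [^] (s mod e) \<otimes> f" using x by simp
      moreover have "s mod e \<in> {0..<e}" using e by simp
      ultimately show "x \<in> (\<lambda>(s, f). h [^] s \<otimes> f) ` ({0..<e} \<times> F)" using x(2) by force
    qed
    have finT: "finite (T 1)" using finite_subset[OF Tsub] F(2) by blast
    have TcG: "T 1 \<subseteq> carrier G" unfolding T_def using h Fc by auto
    show False
    proof (rule key[OF SC, of "insert h F" h f0 u "T 1"])
      show "insert h F \<subseteq> carrier G" using Fc h by simp
      show "h \<in> insert h F" "f0 \<in> insert h F" using f0 by auto
      show "h \<otimes> f0 \<noteq> f0 \<otimes> h" by (rule f0(2))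
      show "u \<in> carrier G" by (rule u(1))
      show "u \<otimes> s = s \<otimes> u" if "s \<in> insert h F" for s using u(3) that Fc h by blast
      show "\<one> \<in> T 1" by (rule T1)
      show "insert h F \<subseteq> T 1" using Th[of 1] TF h by auto
      show "inv s \<in> T 1" if "s \<in> insert h F" for s using that Th[of 1] Tinv h by auto
      show "x \<otimes> y \<in> T 1" if "x \<in> T 1" "y \<in> T 1" for x y using Tclosed that by blast
      show "u \<notin> T 1"
      proof
        assume "u \<in> T 1"
        then obtain n :: nat where "n > 0" "u [^] n = \<one>"
          using fin_closed_pow[OF finT TcG] Tclosed by blast
        then show False using inford_nat[OF u(2,1)] by blast
      qed
    qed
  qed
qed

lemma powmod:
  assumes "x \<in> carrier G" "(e::int) > 0" "x [^] e = \<one>"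
  shows "x [^] (s::int) = x [^] (s mod e)"
proof -
  have "x [^] s = x [^] (e * (s div e) + s mod e)" by simp
  also have "\<dots> = x [^] (e * (s div e)) \<otimes> x [^] (s mod e)" by (rule int_pow_mult[OF assms(1)])
  also have "\<dots> = (x [^] e) [^] (s div e) \<otimes> x [^] (s mod e)" by (simp add: int_pow_pow assms(1))
  also have "\<dots> = x [^] (s mod e)" using assms by simp
  finally show ?thesis .
qed

lemma not_inford_pos:
  assumes "x \<in> carrier G" "\<not> inford G x"
  shows "\<exists>e::int. e > 0 \<and> x [^] e = \<one>"
proof -
  obtain e0 :: int where e0: "e0 \<noteq> 0" "x [^] e0 = \<one>" using assms(2) unfolding inford_def by blast
  show ?thesis
  proof (cases "e0 > 0")
    case True then show ?thesis using e0 by blast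
  next
    case False
    then have "- e0 > 0" using e0 by simp
    moreover have "x [^] (- e0) = \<one>" using e0 assms(1) by (simp add: int_pow_neg)
    ultimately show ?thesis by blast
  qed
qed

lemma absub:
  assumes a: "a \<in> carrier G" and d: "d \<in> carrier G" and ad: "a \<otimes> d = d \<otimes> a"
  shows "subgroup {a [^] (x::int) \<otimes> d [^] (z::int) | x z. True} G"
proof -
  let ?F = "{a [^] (x::int) \<otimes> d [^] (z::int) | x z. True}"
  have mem: "a [^] (x::int) \<otimes> d [^] (z::int) \<in> ?F" for x z by blast
  show ?thesis
  proof (rule subgroupI)
    show "?F \<subseteq> carrier G" using a d by auto
    show "?F \<noteq> {}" using mem by blast
  next
    fix g assume "g \<in> ?F"
    then obtain x z :: int where g: "g = a [^] x \<otimes> d [^] z" by blast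
    have "inv g = inv (d [^] z) \<otimes> inv (a [^] x)" using g a d by (simp add: inv_mult_group)
    also have "\<dots> = d [^] (- z) \<otimes> a [^] (- x)" using a d by (simp add: int_pow_neg)
    also have "\<dots> = a [^] (- x) \<otimes> d [^] (- z)" using comm_pow2[OF a d ad] by simp
    finally show "inv g \<in> ?F" using mem by simp
  next
    fix g h assume "g \<in> ?F" "h \<in> ?F"
    then obtain x z x' z' :: int where g: "g = a [^] x \<otimes> d [^] z" and h: "h = a [^] x' \<otimes> d [^] z'" by blast
    have "g \<otimes> h = a [^] x \<otimes> (d [^] z \<otimes> a [^] x') \<otimes> d [^] z'" using g h a d by (simp add: m_assoc)
    also have "\<dots> = a [^] x \<otimes> (a [^] x' \<otimes> d [^] z) \<otimes> d [^] z'" using comm_pow2[OF a d ad, of x' z] by simp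
    also have "\<dots> = (a [^] x \<otimes> a [^] x') \<otimes> (d [^] z \<otimes> d [^] z')" using a d by (simp add: m_assoc)
    also have "\<dots> = a [^] (x + x') \<otimes> d [^] (z + z')" using a d by (simp add: int_pow_mult)
    finally show "g \<otimes> h \<in> ?F" using mem by simp
  qed
qed

lemma absub_finite:
  assumes a: "a \<in> carrier G" and d: "d \<in> carrier G" and "\<not> inford G a" "\<not> inford G d"
  shows "finite {a [^] (x::int) \<otimes> d [^] (z::int) | x z. True}"
proof -
  obtain e1 :: int where e1: "e1 > 0" "a [^] e1 = \<one>" using not_inford_pos[OF a assms(3)] by blast
  obtain e2 :: int where e2: "e2 > 0" "d [^] e2 = \<one>" using not_inford_pos[OF d assms(4)] by blast
  have "{a [^] (x::int) \<otimes> d [^] (z::int) | x z. True} \<subseteq> (\<lambda>(x, z). a [^] x \<otimes> d [^] z) ` ({0..<e1} \<times> {0..<e2})"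
  proof
    fix g assume "g \<in> {a [^] (x::int) \<otimes> d [^] (z::int) | x z. True}"
    then obtain x z :: int where g: "g = a [^] x \<otimes> d [^] z" by blast
    have "g = a [^] (x mod e1) \<otimes> d [^] (z mod e2)" using g powmod[OF a e1] powmod[OF d e2] by simp
    moreover have "x mod e1 \<in> {0..<e1}" "z mod e2 \<in> {0..<e2}" using e1 e2 by auto
    ultimately show "g \<in> (\<lambda>(x, z). a [^] x \<otimes> d [^] z) ` ({0..<e1} \<times> {0..<e2})" by force
  qed
  then show ?thesis using finite_subset by blast
qed

lemma uniq_exp:
  assumes a: "a \<in> carrier G" "inford G a" and d: "d \<in> carrier G" "(Q::int) \<noteq> 0" "d [^] Q = \<one>"
  and ad: "a \<otimes> d = d \<otimes> a"
  and eq: "a [^] (m::int) \<otimes> d [^] (n::int) = a [^] (m'::int) \<otimes> d [^] (n'::int)"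
  shows "m = m'"
proof -
  have dQ: "d [^] (k * Q) = \<one>" for k
  proof -
    have "d [^] (k * Q) = (d [^] Q) [^] k" using d(1) by (simp add: int_pow_pow mult.commute)
    then show ?thesis using d(3) by simp
  qed
  have pw: "(a [^] x \<otimes> d [^] y) [^] Q = a [^] (x * Q)" for x y :: int
  proof -
    have "(a [^] x \<otimes> d [^] y) [^] Q = (a [^] x) [^] Q \<otimes> (d [^] y) [^] Q"
      by (rule int_pow_mult_distrib[OF comm_pow2[OF a(1) d(1) ad] int_pow_closed[OF a(1)] int_pow_closed[OF d(1)]])
    also have "\<dots> = a [^] (x * Q) \<otimes> d [^] (y * Q)" using a(1) d(1) by (simp add: int_pow_pow)
    also have "\<dots> = a [^] (x * Q)" using dQ a(1) by simp
    finally show ?thesis .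
  qed
  have "a [^] (m * Q) = a [^] (m' * Q)" using pw[of m n] pw[of m' n'] eq by simp
  then have "a [^] (m * Q - m' * Q) = \<one>" using a(1) by (simp add: int_pow_diff)
  then have "m * Q - m' * Q = 0" using a(2) unfolding inford_def by blast
  then show ?thesis using d(2) by (simp add: left_diff_distrib[symmetric])
qed

lemma heis_nf:
  assumes a: "a \<in> carrier G" and b: "b \<in> carrier G" and d: "d \<in> carrier G"
  and ba: "b \<otimes> a = a \<otimes> d \<otimes> b" and ad: "a \<otimes> d = d \<otimes> a" and bd: "b \<otimes> d = d \<otimes> b"
  shows "b [^] (y::int) \<otimes> a [^] (x::int) = a [^] x \<otimes> b [^] y \<otimes> d [^] (x * y)"
proof -
  have 1: "inv a \<otimes> b \<otimes> inv (inv a) = d \<otimes> b"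
  proof -
    have "inv a \<otimes> b \<otimes> inv (inv a) = inv a \<otimes> (b \<otimes> a)" using a b by (simp add: m_assoc)
    also have "\<dots> = inv a \<otimes> (a \<otimes> d \<otimes> b)" by (simp only: ba)
    also have "\<dots> = d \<otimes> b" using a b d by (simp add: m_assoc)
    finally show ?thesis .
  qed
  have 2: "inv a \<otimes> b [^] y \<otimes> a = d [^] y \<otimes> b [^] y"
  proof -
    have "inv a \<otimes> b [^] y \<otimes> a = inv a \<otimes> b [^] y \<otimes> inv (inv a)" using a by simp
    also have "\<dots> = (inv a \<otimes> b \<otimes> inv (inv a)) [^] y" using conj_pow[of "inv a" b y] a b by simp
    also have "\<dots> = (d \<otimes> b) [^] y" by (simp only: 1)
    also have "\<dots> = d [^] y \<otimes> b [^] y" using int_pow_mult_distrib[OF bd[symmetric] d b] .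
    finally show ?thesis .
  qed
  have 4: "b [^] y \<otimes> a \<otimes> inv (b [^] y) = a \<otimes> d [^] y"
  proof -
    have "b [^] y \<otimes> a = a \<otimes> (inv a \<otimes> b [^] y \<otimes> a)" using a b by (simp add: m_assoc)
    also have "\<dots> = a \<otimes> (d [^] y \<otimes> b [^] y)" by (simp only: 2)
    finally have "b [^] y \<otimes> a \<otimes> inv (b [^] y) = a \<otimes> (d [^] y \<otimes> b [^] y) \<otimes> inv (b [^] y)" by simp
    also have "\<dots> = a \<otimes> d [^] y" using a b d by (simp add: m_assoc)
    finally show ?thesis .
  qed
  have da: "d [^] y \<otimes> a = a \<otimes> d [^] y" using comm_pow1[OF d a ad[symmetric]] .
  have 5: "b [^] y \<otimes> a [^] x \<otimes> inv (b [^] y) = a [^] x \<otimes> d [^] (x * y)"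
  proof -
    have "b [^] y \<otimes> a [^] x \<otimes> inv (b [^] y) = (b [^] y \<otimes> a \<otimes> inv (b [^] y)) [^] x"
      using conj_pow[of "b [^] y" a x] a b by simp
    also have "\<dots> = (a \<otimes> d [^] y) [^] x" by (simp only: 4)
    also have "\<dots> = a [^] x \<otimes> (d [^] y) [^] x" using int_pow_mult_distrib[OF da[symmetric] a] d by simp
    also have "\<dots> = a [^] x \<otimes> d [^] (x * y)" using d by (simp add: int_pow_pow mult.commute)
    finally show ?thesis .
  qed
  have "b [^] y \<otimes> a [^] x = (b [^] y \<otimes> a [^] x \<otimes> inv (b [^] y)) \<otimes> b [^] y" using a b by (simp add: m_assoc)
  also have "\<dots> = a [^] x \<otimes> d [^] (x * y) \<otimes> b [^] y" by (simp only: 5)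
  also have "\<dots> = a [^] x \<otimes> (d [^] (x * y) \<otimes> b [^] y)" using a b d by (simp add: m_assoc)
  also have "\<dots> = a [^] x \<otimes> (b [^] y \<otimes> d [^] (x * y))" using comm_pow2[OF d b bd[symmetric], of "x * y" y] by simp
  also have "\<dots> = a [^] x \<otimes> b [^] y \<otimes> d [^] (x * y)" using a b d by (simp add: m_assoc)
  finally show ?thesis .
qed

lemma heis_mul:
  assumes a: "a \<in> carrier G" and b: "b \<in> carrier G" and d: "d \<in> carrier G"
  and ba: "b \<otimes> a = a \<otimes> d \<otimes> b" and ad: "a \<otimes> d = d \<otimes> a" and bd: "b \<otimes> d = d \<otimes> b"
  shows "(a [^] (x::int) \<otimes> b [^] (y::int) \<otimes> d [^] (z::int)) \<otimes> (a [^] (x'::int) \<otimes> b [^] (y'::int) \<otimes> d [^] (z'::int))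
         = a [^] (x + x') \<otimes> b [^] (y + y') \<otimes> d [^] (z + z' + x' * y)"
proof -
  have nf: "b [^] y \<otimes> a [^] x' = a [^] x' \<otimes> b [^] y \<otimes> d [^] (x' * y)" by (rule heis_nf[OF a b d ba ad bd])
  have c1: "d [^] z \<otimes> a [^] x' = a [^] x' \<otimes> d [^] z" by (rule comm_pow2[OF d a ad[symmetric]])
  have c2: "d [^] z \<otimes> b [^] y' = b [^] y' \<otimes> d [^] z" by (rule comm_pow2[OF d b bd[symmetric]])
  have c3: "d [^] (x' * y) \<otimes> b [^] y' = b [^] y' \<otimes> d [^] (x' * y)" by (rule comm_pow2[OF d b bd[symmetric]])
  have "(a [^] x \<otimes> b [^] y \<otimes> d [^] z) \<otimes> (a [^] x' \<otimes> b [^] y' \<otimes> d [^] z')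
      = a [^] x \<otimes> b [^] y \<otimes> (d [^] z \<otimes> a [^] x') \<otimes> b [^] y' \<otimes> d [^] z'" using a b d by (simp add: m_assoc)
  also have "\<dots> = a [^] x \<otimes> b [^] y \<otimes> (a [^] x' \<otimes> d [^] z) \<otimes> b [^] y' \<otimes> d [^] z'" by (simp only: c1)
  also have "\<dots> = a [^] x \<otimes> (b [^] y \<otimes> a [^] x') \<otimes> (d [^] z \<otimes> b [^] y') \<otimes> d [^] z'" using a b d by (simp add: m_assoc)
  also have "\<dots> = a [^] x \<otimes> (a [^] x' \<otimes> b [^] y \<otimes> d [^] (x' * y)) \<otimes> (b [^] y' \<otimes> d [^] z) \<otimes> d [^] z'" by (simp only: nf c2)
  also have "\<dots> = (a [^] x \<otimes> a [^] x') \<otimes> b [^] y \<otimes> (d [^] (x' * y) \<otimes> b [^] y') \<otimes> (d [^] z \<otimes> d [^] z')" using a b d by (simp add: m_assoc)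
  also have "\<dots> = (a [^] x \<otimes> a [^] x') \<otimes> b [^] y \<otimes> (b [^] y' \<otimes> d [^] (x' * y)) \<otimes> (d [^] z \<otimes> d [^] z')" by (simp only: c3)
  also have "\<dots> = (a [^] x \<otimes> a [^] x') \<otimes> (b [^] y \<otimes> b [^] y') \<otimes> (d [^] (x' * y) \<otimes> (d [^] z \<otimes> d [^] z'))" using a b d by (simp add: m_assoc)
  also have "\<dots> = a [^] (x + x') \<otimes> b [^] (y + y') \<otimes> d [^] (x' * y + (z + z'))" using a b d by (simp add: int_pow_mult)
  also have "\<dots> = a [^] (x + x') \<otimes> b [^] (y + y') \<otimes> d [^] (z + z' + x' * y)" by (simp add: algebra_simps)
  finally show ?thesis .
qed

lemma heis_cen:
  assumes a: "a \<in> carrier G" and b: "b \<in> carrier G" and d: "d \<in> carrier G"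
  and ba: "b \<otimes> a = a \<otimes> d \<otimes> b" and ad: "a \<otimes> d = d \<otimes> a" and bd: "b \<otimes> d = d \<otimes> b"
  and ca: "(a [^] (x::int) \<otimes> b [^] (y::int)) \<otimes> a = a \<otimes> (a [^] x \<otimes> b [^] y)"
  and cb: "(a [^] x \<otimes> b [^] y) \<otimes> b = b \<otimes> (a [^] x \<otimes> b [^] y)"
  shows "d [^] y = \<one>" "d [^] x = \<one>"
proof -
  let ?X = "a [^] x \<otimes> b [^] y"
  have Xc: "?X \<in> carrier G" using a b by simp
  have nf1: "b [^] y \<otimes> a [^] (1::int) = a [^] (1::int) \<otimes> b [^] y \<otimes> d [^] (1 * y)" by (rule heis_nf[OF a b d ba ad bd])
  have nf2: "b [^] (1::int) \<otimes> a [^] x = a [^] x \<otimes> b [^] (1::int) \<otimes> d [^] (x * 1)" by (rule heis_nf[OF a b d ba ad bd])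
  have aa: "a [^] x \<otimes> a = a \<otimes> a [^] x" by (rule comm_pow1[OF a a refl])
  have bb: "b \<otimes> b [^] y = b [^] y \<otimes> b" by (rule comm_pow1[OF b b refl, symmetric])
  have db: "d [^] x \<otimes> b [^] y = b [^] y \<otimes> d [^] x" by (rule comm_pow2[OF d b bd[symmetric]])
  have "?X \<otimes> a = a [^] x \<otimes> (b [^] y \<otimes> a)" using a b by (simp add: m_assoc)
  also have "\<dots> = a [^] x \<otimes> (a \<otimes> b [^] y \<otimes> d [^] y)" using nf1 a by simp
  also have "\<dots> = (a [^] x \<otimes> a) \<otimes> b [^] y \<otimes> d [^] y" using a b d by (simp add: m_assoc)
  also have "\<dots> = (a \<otimes> a [^] x) \<otimes> b [^] y \<otimes> d [^] y" by (simp only: aa)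
  also have "\<dots> = (a \<otimes> ?X) \<otimes> d [^] y" using a b d by (simp add: m_assoc)
  finally have "(a \<otimes> ?X) \<otimes> d [^] y = a \<otimes> ?X" using ca by simp
  then show "d [^] y = \<one>" using a d Xc by simp
  have "b \<otimes> ?X = (b \<otimes> a [^] x) \<otimes> b [^] y" using a b by (simp add: m_assoc)
  also have "\<dots> = (a [^] x \<otimes> b \<otimes> d [^] x) \<otimes> b [^] y" using nf2 b by simp
  also have "\<dots> = a [^] x \<otimes> b \<otimes> (d [^] x \<otimes> b [^] y)" using a b d by (simp add: m_assoc)
  also have "\<dots> = a [^] x \<otimes> b \<otimes> (b [^] y \<otimes> d [^] x)" by (simp only: db)
  also have "\<dots> = a [^] x \<otimes> (b \<otimes> b [^] y) \<otimes> d [^] x" using a b d by (simp add: m_assoc)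
  also have "\<dots> = a [^] x \<otimes> (b [^] y \<otimes> b) \<otimes> d [^] x" by (simp only: bb)
  also have "\<dots> = (?X \<otimes> b) \<otimes> d [^] x" using a b d by (simp add: m_assoc)
  finally have "(?X \<otimes> b) \<otimes> d [^] x = ?X \<otimes> b" using cb by simp
  then show "d [^] x = \<one>" using b d Xc by simp
qed

lemma pow_prod:
  assumes g: "g \<in> carrier G" and h: "h \<in> carrier G" and gh: "g \<otimes> h = h \<otimes> g"
  shows "(g [^] (m::int) \<otimes> h [^] (n::int)) [^] (k::int) = g [^] (m * k) \<otimes> h [^] (n * k)"
proof -
  have "(g [^] m \<otimes> h [^] n) [^] k = (g [^] m) [^] k \<otimes> (h [^] n) [^] k"
    by (rule int_pow_mult_distrib[OF comm_pow2[OF g h gh] int_pow_closed[OF g] int_pow_closed[OF h]])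
  also have "\<dots> = g [^] (m * k) \<otimes> h [^] (n * k)" using g h by (simp add: int_pow_pow)
  finally show ?thesis .
qed

lemma heis:
  assumes SC: "\<And>H. subgroup H G \<Longrightarrow> \<not>(\<forall>x\<in>H. \<forall>y\<in>H. x \<otimes> y = y \<otimes> x) \<Longrightarrow> centralizer G H \<subseteq> H"
  and u: "u \<in> carrier G" "inford G u" "\<And>x. x \<in> carrier G \<Longrightarrow> u \<otimes> x = x \<otimes> u"
  and a: "a \<in> carrier G" and b: "b \<in> carrier G" and d: "d \<in> carrier G"
  and ba: "b \<otimes> a = a \<otimes> d \<otimes> b" and ad: "a \<otimes> d = d \<otimes> a" and bd: "b \<otimes> d = d \<otimes> b"
  and d1: "d \<noteq> \<one>"
  shows False
proof -
  define E where "E x y z = a [^] (x::int) \<otimes> b [^] (y::int) \<otimes> d [^] (z::int)" for x y z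
  have Ec: "E x y z \<in> carrier G" for x y z unfolding E_def using a b d by simp
  have Emul: "E x y z \<otimes> E x' y' z' = E (x + x') (y + y') (z + z' + x' * y)" for x y z x' y' z'
    unfolding E_def by (rule heis_mul[OF a b d ba ad bd])
  have Ea: "E x 0 0 = a [^] x" for x unfolding E_def using a b d by simp
  have Eb: "E 0 y 0 = b [^] y" for y unfolding E_def using a b d by simp
  have Ed: "E 0 0 z = d [^] z" for z unfolding E_def using a b d by simp
  have cen: "d [^] y = \<one> \<and> d [^] x = \<one>" if "E x y z = d [^] (w::int)" for x y z w
  proof -
    have "a [^] x \<otimes> b [^] y = (a [^] x \<otimes> b [^] y \<otimes> d [^] z) \<otimes> inv (d [^] z)" using a b d by (simp add: m_assoc)
    also have "\<dots> = d [^] w \<otimes> inv (d [^] z)" using that unfolding E_def by simp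
    also have "\<dots> = d [^] (w - z)" using d by (simp add: int_pow_diff)
    finally have X: "a [^] x \<otimes> b [^] y = d [^] (w - z)" .
    have ca: "(a [^] x \<otimes> b [^] y) \<otimes> a = a \<otimes> (a [^] x \<otimes> b [^] y)"
      unfolding X by (rule comm_pow1[OF d a ad[symmetric]])
    have cb: "(a [^] x \<otimes> b [^] y) \<otimes> b = b \<otimes> (a [^] x \<otimes> b [^] y)"
      unfolding X by (rule comm_pow1[OF d b bd[symmetric]])
    show ?thesis using heis_cen[OF a b d ba ad bd ca cb] by blast
  qed
  have ba_ne: "b \<otimes> a \<noteq> a \<otimes> b"
  proof
    assume "b \<otimes> a = a \<otimes> b"
    then have "a \<otimes> (d \<otimes> b) = a \<otimes> b" using ba a b d by (simp add: m_assoc)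
    then have "d \<otimes> b = b" using a b d by simp
    then show False using d1 b d by simp
  qed
  show False
  proof (cases "inford G d")
    case True
    define T where "T = {E x y z | x y z. even x \<and> even y \<and> 4 dvd z}"
    have Tm: "E x y z \<in> T" if "even x" "even y" "4 dvd z" for x y z unfolding T_def using that by blast
    show False
    proof (rule key[OF SC, of "{a [^] (2::int), b [^] (2::int)}" "a [^] (2::int)" "b [^] (2::int)" d T])
      show "{a [^] (2::int), b [^] (2::int)} \<subseteq> carrier G" using a b by simp
      show "a [^] (2::int) \<in> {a [^] (2::int), b [^] (2::int)}" "b [^] (2::int) \<in> {a [^] (2::int), b [^] (2::int)}" by auto
      show "a [^] (2::int) \<otimes> b [^] (2::int) \<noteq> b [^] (2::int) \<otimes> a [^] (2::int)"
      proof
        assume eq: "a [^] (2::int) \<otimes> b [^] (2::int) = b [^] (2::int) \<otimes> a [^] (2::int)"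
        have "b [^] (2::int) \<otimes> a [^] (2::int) = a [^] (2::int) \<otimes> b [^] (2::int) \<otimes> d [^] (2 * 2 :: int)"
          by (rule heis_nf[OF a b d ba ad bd])
        then have "a [^] (2::int) \<otimes> b [^] (2::int) \<otimes> d [^] (4::int) = a [^] (2::int) \<otimes> b [^] (2::int)" using eq by simp
        then have "d [^] (4::int) = \<one>" using a b d by simp
        then show False using True unfolding inford_def by fastforce
      qed
      show "d \<in> carrier G" by (rule d)
      show "d \<otimes> s = s \<otimes> d" if "s \<in> {a [^] (2::int), b [^] (2::int)}" for s
        using that comm_pow1[OF a d ad, of 2] comm_pow1[OF b d bd, of 2] by auto
      show "\<one> \<in> T" using Tm[of 0 0 0] Ed[of 0] d by simp
      show "{a [^] (2::int), b [^] (2::int)} \<subseteq> T" using Tm[of 2 0 0] Tm[of 0 2 0] Ea Eb by simp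
      show "inv s \<in> T" if "s \<in> {a [^] (2::int), b [^] (2::int)}" for s
      proof -
        have "inv (a [^] (2::int)) = E (-2) 0 0" "inv (b [^] (2::int)) = E 0 (-2) 0"
          using Ea Eb a b by (simp_all add: int_pow_neg)
        then show ?thesis using that Tm[of "-2" 0 0] Tm[of 0 "-2" 0] by auto
      qed
      show "x \<otimes> y \<in> T" if xT: "x \<in> T" and yT: "y \<in> T" for x y
      proof -
        obtain x1 y1 z1 where 1: "x = E x1 y1 z1" "even x1" "even y1" "4 dvd z1" using xT unfolding T_def by blast
        obtain x2 y2 z2 where 2: "y = E x2 y2 z2" "even x2" "even y2" "4 dvd z2" using yT unfolding T_def by blast
        have "4 dvd x2 * y1" using 1 2 by (auto elim!: evenE)
        then have "4 dvd z1 + z2 + x2 * y1" using 1 2 by simp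
        then show ?thesis unfolding 1(1) 2(1) Emul using 1 2 Tm by simp
      qed
      show "d \<notin> T"
      proof
        assume "d \<in> T"
        then obtain x y z where xyz: "d = E x y z" "4 dvd z" unfolding T_def by blast
        have "E x y z = d [^] (1::int)" using xyz d by simp
        from cen[OF this] have "d [^] y = \<one>" "d [^] x = \<one>" by auto
        then have "y = 0" "x = 0" using True unfolding inford_def by blast+
        then have "d [^] z = d [^] (1::int)" using xyz Ed d by simp
        then have "d [^] (z - 1) = \<one>" using d by (simp add: int_pow_diff)
        then have "z - 1 = 0" using True unfolding inford_def by blast
        then have "z = 1" by simp
        then show False using xyz(2) by simp
      qed
    qed
  next
    case dfin: False
    obtain Q :: int where Q: "Q > 0" "d [^] Q = \<one>" using not_inford_pos[OF d dfin] by blast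
    have dQk: "d [^] (Q * k) = \<one>" for k using Q d by (simp add: int_pow_pow[symmetric])
    show False
    proof (cases "inford G a")
      case ainf: True
      define P where "P D \<longleftrightarrow> D > 0 \<and> (\<exists>(g::int) (h::int). b [^] D = a [^] g \<otimes> d [^] h)" for D :: int
      define D where "D = (if \<exists>D. P D then SOME D. P D else 1)"
      have PD: "P D" if "\<exists>D. P D" using that unfolding D_def by (simp add: someI_ex)
      have Dpos: "D > 0" using PD unfolding D_def P_def by (auto split: if_splits)
      define R where "R = 1 + Q * D"
      have "Q * 1 \<le> Q * D" using Q(1) Dpos by (intro mult_left_mono) auto
      then have RQ: "R > Q" unfolding R_def by simp
      define T where "T = {E x y z | x y z. R dvd x \<and> R dvd y}"
      have Tm: "E x y z \<in> T" if "R dvd x" "R dvd y" for x y z unfolding T_def using that by blast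
      show False
      proof (rule key[OF SC, of "{a [^] R, b [^] R}" "a [^] R" "b [^] R" "a [^] Q" T])
        show "{a [^] R, b [^] R} \<subseteq> carrier G" using a b by simp
        show "a [^] R \<in> {a [^] R, b [^] R}" "b [^] R \<in> {a [^] R, b [^] R}" by auto
        show "a [^] R \<otimes> b [^] R \<noteq> b [^] R \<otimes> a [^] R"
        proof
          assume eq: "a [^] R \<otimes> b [^] R = b [^] R \<otimes> a [^] R"
          have "b [^] R \<otimes> a [^] R = a [^] R \<otimes> b [^] R \<otimes> d [^] (R * R)"
            by (rule heis_nf[OF a b d ba ad bd])
          then have "a [^] R \<otimes> b [^] R \<otimes> d [^] (R * R) = a [^] R \<otimes> b [^] R" using eq by simp
          then have dRR: "d [^] (R * R) = \<one>" using a b d by simp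
          have "R * R = 1 + Q * (2 * D + Q * D * D)" unfolding R_def by (simp add: algebra_simps)
          then have "d [^] (R * R) = d [^] (1::int) \<otimes> d [^] (Q * (2 * D + Q * D * D))" using d by (simp add: int_pow_mult)
          then have "d [^] (R * R) = d" using dQk d by simp
          then show False using dRR d1 by simp
        qed
        show "a [^] Q \<in> carrier G" using a by simp
        show "a [^] Q \<otimes> s = s \<otimes> a [^] Q" if "s \<in> {a [^] R, b [^] R}" for s
        proof -
          have 1: "a [^] Q \<otimes> a [^] R = a [^] R \<otimes> a [^] Q" by (rule comm_pow2[OF a a refl])
          have "b [^] R \<otimes> a [^] Q = a [^] Q \<otimes> b [^] R \<otimes> d [^] (Q * R)" by (rule heis_nf[OF a b d ba ad bd])
          then have 2: "a [^] Q \<otimes> b [^] R = b [^] R \<otimes> a [^] Q" using dQk a b by simp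
          show ?thesis using that 1 2 by auto
        qed
        show "\<one> \<in> T" using Tm[of 0 0 0] Ed[of 0] d by simp
        show "{a [^] R, b [^] R} \<subseteq> T" using Tm[of R 0 0] Tm[of 0 R 0] Ea Eb by simp
        show "inv s \<in> T" if "s \<in> {a [^] R, b [^] R}" for s
        proof -
          have "inv (a [^] R) = E (-R) 0 0" "inv (b [^] R) = E 0 (-R) 0"
            using Ea Eb a b by (simp_all add: int_pow_neg)
          then show ?thesis using that Tm[of "-R" 0 0] Tm[of 0 "-R" 0] by auto
        qed
        show "x \<otimes> y \<in> T" if xT: "x \<in> T" and yT: "y \<in> T" for x y
        proof -
          obtain x1 y1 z1 where 1: "x = E x1 y1 z1" "R dvd x1" "R dvd y1" using xT unfolding T_def by blast
          obtain x2 y2 z2 where 2: "y = E x2 y2 z2" "R dvd x2" "R dvd y2" using yT unfolding T_def by blast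
          show ?thesis unfolding 1(1) 2(1) Emul using 1 2 Tm by simp
        qed
        show "a [^] Q \<notin> T"
        proof
          assume "a [^] Q \<in> T"
          then obtain x y z where xyz: "a [^] Q = E x y z" "R dvd x" "R dvd y" unfolding T_def by blast
          have Q0: "Q \<noteq> 0" using Q(1) by simp
          have uq: "m = m'" if "a [^] (m::int) \<otimes> d [^] (n::int) = a [^] (m'::int) \<otimes> d [^] (n'::int)" for m n m' n'
            by (rule uniq_exp[OF a ainf d Q0 Q(2) ad that])
          have by_: "b [^] y = a [^] (Q - x) \<otimes> d [^] (- z)"
          proof -
            have "b [^] y = inv (a [^] x) \<otimes> (a [^] x \<otimes> b [^] y \<otimes> d [^] z) \<otimes> inv (d [^] z)"
              using a b d by (simp add: m_assoc)
            also have "\<dots> = inv (a [^] x) \<otimes> a [^] Q \<otimes> inv (d [^] z)" using xyz(1) unfolding E_def by simp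
            also have "\<dots> = a [^] (Q - x) \<otimes> d [^] (- z)"
            proof -
              have "a [^] (Q - x) = a [^] (- x + Q)" by simp
              also have "\<dots> = a [^] (- x) \<otimes> a [^] Q" by (rule int_pow_mult[OF a])
              also have "\<dots> = inv (a [^] x) \<otimes> a [^] Q" using a by (simp add: int_pow_neg)
              finally have e1: "a [^] (Q - x) = inv (a [^] x) \<otimes> a [^] Q" .
              have e2: "d [^] (- z) = inv (d [^] z)" using d by (simp add: int_pow_neg)
              show ?thesis by (simp only: e1 e2)
            qed
            finally show ?thesis .
          qed
          have RdQ: "R dvd Q - x \<Longrightarrow> False"
          proof -
            assume "R dvd Q - x"
            then have "R dvd (Q - x) + x" using xyz(2) by (rule dvd_add)
            then have "R dvd Q" by simp
            then have "R \<le> Q" using Q(1) by (rule zdvd_imp_le)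
            then show False using RQ by simp
          qed
          show False
          proof (cases "y = 0")
            case True
            have "a [^] Q \<otimes> d [^] (0::int) = a [^] x \<otimes> d [^] z"
              using xyz(1) True a b d unfolding E_def by simp
            then have "Q = x" using uq by blast
            then show False using RdQ by simp
          next
            case False
            have ex: "\<exists>D. P D"
            proof (cases "y > 0")
              case True
              have "\<exists>(g::int) (h::int). b [^] y = a [^] g \<otimes> d [^] h"
                using by_ by blast
              then have "P y" unfolding P_def using True by blast
              then show ?thesis by blast
            next
              case False
              then have "- y > 0" using \<open>y \<noteq> 0\<close> by simp
              moreover have "b [^] (- y) = a [^] (- (Q - x)) \<otimes> d [^] z"
              proof -
                have "b [^] (- y) = inv (a [^] (Q - x) \<otimes> d [^] (- z))" using by_ b by (simp add: int_pow_neg)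
                also have "\<dots> = inv (d [^] (- z)) \<otimes> inv (a [^] (Q - x))" using a d by (simp add: inv_mult_group)
                also have "\<dots> = d [^] z \<otimes> a [^] (- (Q - x))"
                proof -
                  have e1: "inv (a [^] (Q - x)) = a [^] (- (Q - x))" by (simp only: int_pow_neg[OF a])
                  have e2: "inv (d [^] (- z)) = d [^] z" using int_pow_neg[OF d, of "- z"] by simp
                  show ?thesis by (simp only: e1 e2)
                qed
                also have "\<dots> = a [^] (- (Q - x)) \<otimes> d [^] z" by (rule comm_pow2[OF d a ad[symmetric]])
                finally show ?thesis .
              qed
              moreover have "\<exists>(g::int) (h::int). b [^] (- y) = a [^] g \<otimes> d [^] h"
                using calculation by blast
              ultimately have "P (- y)" unfolding P_def by blast
              then show ?thesis by blast
            qed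
            obtain g h :: int where gh: "b [^] D = a [^] g \<otimes> d [^] h" using PD[OF ex] unfolding P_def by blast
            have "(b [^] y) [^] D = (b [^] D) [^] y" using b by (simp add: int_pow_pow mult.commute)
            then have "(a [^] (Q - x) \<otimes> d [^] (- z)) [^] D = (a [^] g \<otimes> d [^] h) [^] y" unfolding by_ gh .
            then have "a [^] ((Q - x) * D) \<otimes> d [^] (- z * D) = a [^] (g * y) \<otimes> d [^] (h * y)"
              using pow_prod[OF a d ad] by simp
            then have eqx: "(Q - x) * D = g * y" using uq by blast
            have "R dvd (Q - x) * D" unfolding eqx using xyz(3) by simp
            then have "R dvd (Q - x) * D * Q" by simp
            moreover have "(Q - x) * D * Q = (Q - x) * R - (Q - x)" unfolding R_def by (simp add: algebra_simps)
            ultimately have "R dvd (Q - x) * R - (Q - x)" by simp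
            moreover have "R dvd (Q - x) * R" by simp
            ultimately have "R dvd (Q - x) * R - ((Q - x) * R - (Q - x))" by (rule dvd_diff[rotated])
            then have "R dvd (Q - x)" by simp
            then show False using RdQ by simp
          qed
        qed
      qed
    next
      case afin: False
      define F where "F = {a [^] (x::int) \<otimes> d [^] (z::int) | x z. True}"
      have Fsub: "subgroup F G" unfolding F_def by (rule absub[OF a d ad])
      have Ffin: "finite F" unfolding F_def by (rule absub_finite[OF a d afin dfin])
      show False
      proof (rule gp[OF SC u Fsub Ffin b])
        show "b \<otimes> f \<otimes> inv b \<in> F" if fF: "f \<in> F" for f
        proof -
          obtain x z :: int where f: "f = a [^] x \<otimes> d [^] z" using fF unfolding F_def by blast
          have nf: "b [^] (1::int) \<otimes> a [^] x = a [^] x \<otimes> b [^] (1::int) \<otimes> d [^] (x * 1)"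
            by (rule heis_nf[OF a b d ba ad bd])
          have bdz: "b \<otimes> d [^] z = d [^] z \<otimes> b" using comm_pow1[OF d b bd[symmetric], of z] by simp
          have "b \<otimes> f \<otimes> inv b = (b \<otimes> a [^] x) \<otimes> d [^] z \<otimes> inv b" using f a b d by (simp add: m_assoc)
          also have "\<dots> = (a [^] x \<otimes> b \<otimes> d [^] x) \<otimes> d [^] z \<otimes> inv b" using nf b by simp
          also have "\<dots> = a [^] x \<otimes> (b \<otimes> (d [^] x \<otimes> d [^] z)) \<otimes> inv b" using a b d by (simp add: m_assoc)
          also have "\<dots> = a [^] x \<otimes> (b \<otimes> d [^] (x + z)) \<otimes> inv b" using d by (simp add: int_pow_mult)
          also have "\<dots> = a [^] x \<otimes> (d [^] (x + z) \<otimes> b) \<otimes> inv b" using comm_pow1[OF d b bd[symmetric], of "x + z"] by simp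
          also have "\<dots> = a [^] x \<otimes> d [^] (x + z)" using a b d by (simp add: m_assoc)
          finally show ?thesis unfolding F_def by blast
        qed
        have "a = a [^] (1::int) \<otimes> d [^] (0::int)" using a d by simp
        then show "a \<in> F" unfolding F_def by blast
        show "b \<otimes> a \<noteq> a \<otimes> b" by (rule ba_ne)
      qed
    qed
  qed
qed

lemma cyc_struct:
  assumes Z: "Z \<lhd> G" and N: "subgroup N G" "Z \<subseteq> N"
  and cyc: "cyclic_group ((G\<lparr>carrier := N\<rparr>) Mod Z)"
  shows "\<exists>a\<in>N. \<forall>n\<in>N. \<exists>z\<in>Z. \<exists>t::int. n = z \<otimes> a [^] t"
proof -
  let ?GN = "G\<lparr>carrier := N\<rparr>"
  let ?Q = "?GN Mod Z"
  interpret GN: group ?GN using subgroup_imp_group[OF N(1)] .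
  have nZ: "Z \<lhd> ?GN" by (rule normal_restrict_supergroup[OF N(1) Z N(2)])
  interpret Q: group ?Q using normal.factorgroup_is_group[OF nZ] .
  have hom: "(\<lambda>x. Z #>\<^bsub>?GN\<^esub> x) \<in> hom ?GN ?Q" by (rule normal.r_coset_hom_Mod[OF nZ])
  interpret pi: group_hom ?GN ?Q "\<lambda>x. Z #>\<^bsub>?GN\<^esub> x"
    using hom by (simp add: group_hom_axioms_def group_hom_def GN.is_group Q.is_group)
  obtain Xg where Xg: "Xg \<in> carrier ?Q" "carrier ?Q = range (\<lambda>n::int. Xg [^]\<^bsub>?Q\<^esub> n)"
    using cyc Q.cyclic_group by blast
  obtain a where a: "a \<in> N" "Xg = Z #>\<^bsub>?GN\<^esub> a" using Xg(1) unfolding carrier_FactGroup by auto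
  have Zsub: "subgroup Z G" using Z normal_imp_subgroup by blast
  have rc: "Z #>\<^bsub>?GN\<^esub> x = Z #> x" for x unfolding r_coset_def by simp
  show ?thesis
  proof (intro bexI[OF _ a(1)] ballI)
    fix n assume n: "n \<in> N"
    have "Z #>\<^bsub>?GN\<^esub> n \<in> carrier ?Q" using n unfolding carrier_FactGroup by auto
    then obtain t :: int where t: "Z #>\<^bsub>?GN\<^esub> n = Xg [^]\<^bsub>?Q\<^esub> t" using Xg(2) by auto
    also have "\<dots> = Z #>\<^bsub>?GN\<^esub> (a [^]\<^bsub>?GN\<^esub> t)" unfolding a(2) using pi.hom_int_pow[of a t] a(1) by simp
    also have "\<dots> = Z #> (a [^] t)" using int_pow_consistent[OF N(1) a(1), of t] rc by simp
    finally have "Z #> n = Z #> (a [^] t)" using rc by simp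
    moreover have "n \<in> Z #> n" by (rule rcos_self[OF subgroup.mem_carrier[OF N(1) n] Zsub])
    ultimately have "n \<in> Z #> (a [^] t)" by simp
    then obtain z where "z \<in> Z" "n = z \<otimes> a [^] t" unfolding r_coset_def by blast
    then show "\<exists>z\<in>Z. \<exists>t::int. n = z \<otimes> a [^] t" by blast
  qed
qed

lemma central_inford:
  assumes SC: "\<And>H. subgroup H G \<Longrightarrow> \<not>(\<forall>x\<in>H. \<forall>y\<in>H. x \<otimes> y = y \<otimes> x) \<Longrightarrow> centralizer G H \<subseteq> H"
  and NI: "\<And>x. x \<in> carrier G \<Longrightarrow> x [^] (2::nat) = \<one> \<Longrightarrow> x = \<one>"
  and inf: "infinite (carrier G)"
  and Hs: "Hs \<noteq> []" "hd Hs = {\<one>}" "last Hs = carrier G" "\<And>i. i < length Hs \<Longrightarrow> Hs ! i \<lhd> G"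
    "\<And>i. Suc i < length Hs \<Longrightarrow> Hs ! i \<subseteq> Hs ! Suc i \<and> cyclic_group ((G\<lparr>carrier := Hs ! Suc i\<rparr>) Mod (Hs ! i))"
  shows "\<exists>u\<in>carrier G. inford G u \<and> (\<forall>x\<in>carrier G. u \<otimes> x = x \<otimes> u)"
proof -
  define L where "L = length Hs"
  have L0: "L > 0" using Hs(1) unfolding L_def by simp
  have h0: "Hs ! 0 = {\<one>}" using Hs(1,2) by (simp add: hd_conv_nth)
  have hL: "Hs ! (L - 1) = carrier G" using Hs(1,3) unfolding L_def by (simp add: last_conv_nth)
  have ex: "\<exists>i. i < L \<and> infinite (Hs ! i)" using hL inf L0 by (intro exI[of _ "L - 1"]) simp
  define i where "i = (LEAST i. i < L \<and> infinite (Hs ! i))"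
  have i: "i < L" "infinite (Hs ! i)" using LeastI_ex[OF ex] unfolding i_def by auto
  have below: "finite (Hs ! k)" if "k < i" for k
    using not_less_Least[OF that[unfolded i_def]] that i(1) unfolding i_def by auto
  have f0: "finite (Hs ! 0)" using h0 by simp
  have "i \<noteq> 0"
  proof
    assume "i = 0" then show False using i(2) f0 by simp
  qed
  then obtain i' where i': "i = Suc i'" by (cases i) auto
  define F where "F = Hs ! i'"
  define N where "N = Hs ! i"
  have Ffin: "finite F" unfolding F_def using below[of i'] i' by simp
  have FnG: "F \<lhd> G" unfolding F_def using Hs(4)[of i'] i' i(1) unfolding L_def by simp
  have NnG: "N \<lhd> G" unfolding N_def using Hs(4)[of i] i(1) unfolding L_def by simp
  have FN: "F \<subseteq> N" and cyc: "cyclic_group ((G\<lparr>carrier := N\<rparr>) Mod F)"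
    using Hs(5)[of i'] i' i(1) unfolding F_def N_def L_def by auto
  have Ninf: "infinite N" using i(2) unfolding N_def .
  have Fsub: "subgroup F G" using FnG normal_imp_subgroup by blast
  have Nsub: "subgroup N G" using NnG normal_imp_subgroup by blast
  have Fc: "F \<subseteq> carrier G" using Fsub subgroup.subset by blast
  have Nc: "N \<subseteq> carrier G" using Nsub subgroup.subset by blast
  obtain y where y: "y \<in> N" "\<And>n. n \<in> N \<Longrightarrow> \<exists>f\<in>F. \<exists>t::int. n = f \<otimes> y [^] t"
    using cyc_struct[OF FnG Nsub FN cyc] by blast
  have yc: "y \<in> carrier G" using y(1) Nc by blast
  have yinf: "inford G y"
  proof (rule ccontr)
    assume "\<not> inford G y"
    then obtain e :: int where e: "e > 0" "y [^] e = \<one>" using not_inford_pos[OF yc] by blast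
    have "N \<subseteq> (\<lambda>(f, t). f \<otimes> y [^] t) ` (F \<times> {0..<e})"
    proof
      fix n assume "n \<in> N"
      then obtain f t where ft: "f \<in> F" "n = f \<otimes> y [^] (t::int)" using y(2) by blast
      have "n = f \<otimes> y [^] (t mod e)" using ft powmod[OF yc e] by simp
      moreover have "t mod e \<in> {0..<e}" using e by simp
      ultimately show "n \<in> (\<lambda>(f, t). f \<otimes> y [^] t) ` (F \<times> {0..<e})" using ft(1) by force
    qed
    moreover have "finite ((\<lambda>(f, t). f \<otimes> y [^] t) ` (F \<times> {0..<e}))" using Ffin by simp
    ultimately have "finite N" by (rule finite_subset)
    then show False using Ninf by simp
  qed
  obtain p :: nat where p: "p > 0" "\<And>f. f \<in> F \<Longrightarrow> y [^] p \<otimes> f = f \<otimes> y [^] p"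
    using conj_pigeon[OF Ffin Fc yc] normal.inv_op_closed2[OF FnG yc] by blast
  define y' where "y' = y [^] (int p)"
  have y'c: "y' \<in> carrier G" unfolding y'_def using yc by simp
  have y'F: "y' \<otimes> f = f \<otimes> y'" if "f \<in> F" for f unfolding y'_def using p(2)[OF that] by (simp add: int_pow_int)
  define K where "K = card F"
  have Kpos: "K > 0" unfolding K_def using Ffin subgroup.one_closed[OF Fsub] card_gt_0_iff by blast
  have fK: "f [^] (int K) = \<one>" if "f \<in> F" for f
  proof -
    interpret GF: group "G\<lparr>carrier := F\<rparr>" using subgroup_imp_group[OF Fsub] .
    have "f [^]\<^bsub>G\<lparr>carrier := F\<rparr>\<^esub> (order (G\<lparr>carrier := F\<rparr>)) = \<one>\<^bsub>G\<lparr>carrier := F\<rparr>\<^esub>"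
      using GF.pow_order_eq_1 that by simp
    then have "f [^] K = \<one>" unfolding K_def order_def using nat_pow_consistent[of f "card F" F] by simp
    then show ?thesis by (simp add: int_pow_int)
  qed
  define u where "u = y' [^] (int K)"
  have uc: "u \<in> carrier G" unfolding u_def using y'c by simp
  have uinf: "inford G u" unfolding inford_def
  proof (intro allI impI)
    fix n :: int assume "u [^] n = \<one>"
    then have "y [^] (int p * int K * n) = \<one>" unfolding u_def y'_def using yc by (simp add: int_pow_pow)
    then have "int p * int K * n = 0" using yinf unfolding inford_def by blast
    then show "n = 0" using p(1) Kpos by simp
  qed
  interpret Q: group "G Mod F" using normal.factorgroup_is_group[OF FnG] .
  have hom: "(\<lambda>x. F #> x) \<in> hom G (G Mod F)" by (rule normal.r_coset_hom_Mod[OF FnG])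
  interpret pi: group_hom G "G Mod F" "\<lambda>x. F #> x"
    using hom by (simp add: group_hom_axioms_def group_hom_def is_group Q.is_group)
  have piF: "F #> f = \<one>\<^bsub>G Mod F\<^esub>" if "f \<in> F" for f
    using coset_join2[of f F] that Fc Fsub by auto
  have pi_eq: "x \<otimes> inv z \<in> F" if "F #> x = F #> z" "x \<in> carrier G" "z \<in> carrier G" for x z
  proof -
    have "x \<in> F #> z" using rcos_self[OF that(2) Fsub] that(1) by simp
    then show ?thesis using subgroup.rcos_module_imp[OF Fsub is_group that(3)] by blast
  qed
  have pi_one: "x \<in> F" if "F #> x = \<one>\<^bsub>G Mod F\<^esub>" "x \<in> carrier G" for x
    using rcos_self[OF that(2) Fsub] that(1) by simp
  have comm: "u \<otimes> h = h \<otimes> u" if hc: "h \<in> carrier G" for h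
  proof -
    have "h \<otimes> y \<otimes> inv h \<in> N" using normal.inv_op_closed2[OF NnG hc y(1)] .
    then obtain f t where ft: "f \<in> F" "h \<otimes> y \<otimes> inv h = f \<otimes> y [^] (t::int)" using y(2) by blast
    have "inv h \<otimes> y \<otimes> h \<in> N" using normal.inv_op_closed1[OF NnG hc y(1)] .
    then obtain f' t' where ft': "f' \<in> F" "inv h \<otimes> y \<otimes> h = f' \<otimes> y [^] (t'::int)" using y(2) by blast
    have fc: "f \<in> carrier G" "f' \<in> carrier G" using ft(1) ft'(1) Fc by blast+
    let ?Y = "F #> y" and ?H = "F #> h"
    have Yc: "?Y \<in> carrier (G Mod F)" and Hc: "?H \<in> carrier (G Mod F)" using yc hc by simp_all
    have piinv: "F #> inv h = inv\<^bsub>G Mod F\<^esub> ?H" using pi.hom_inv[OF hc] .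
    have pipow: "F #> (y [^] k) = ?Y [^]\<^bsub>G Mod F\<^esub> k" for k :: int using pi.hom_int_pow[OF yc] .
    have piconj: "F #> (g \<otimes> x \<otimes> inv g) = (F #> g) \<otimes>\<^bsub>G Mod F\<^esub> (F #> x) \<otimes>\<^bsub>G Mod F\<^esub> inv\<^bsub>G Mod F\<^esub> (F #> g)"
      if "g \<in> carrier G" "x \<in> carrier G" for g x using that by simp
    have e1: "?H \<otimes>\<^bsub>G Mod F\<^esub> ?Y \<otimes>\<^bsub>G Mod F\<^esub> inv\<^bsub>G Mod F\<^esub> ?H = ?Y [^]\<^bsub>G Mod F\<^esub> t"
    proof -
      have "?H \<otimes>\<^bsub>G Mod F\<^esub> ?Y \<otimes>\<^bsub>G Mod F\<^esub> inv\<^bsub>G Mod F\<^esub> ?H = F #> (h \<otimes> y \<otimes> inv h)"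
        using piconj[OF hc yc] by simp
      also have "\<dots> = F #> (f \<otimes> y [^] t)" using ft(2) by simp
      also have "\<dots> = (F #> f) \<otimes>\<^bsub>G Mod F\<^esub> (F #> (y [^] t))" using fc yc by simp
      also have "\<dots> = ?Y [^]\<^bsub>G Mod F\<^esub> t" using piF[OF ft(1)] pipow[of t] yc Q.l_one[OF Q.int_pow_closed[OF Yc, of t]] by simp
      finally show ?thesis .
    qed
    have e2: "inv\<^bsub>G Mod F\<^esub> ?H \<otimes>\<^bsub>G Mod F\<^esub> ?Y \<otimes>\<^bsub>G Mod F\<^esub> inv\<^bsub>G Mod F\<^esub> (inv\<^bsub>G Mod F\<^esub> ?H) = ?Y [^]\<^bsub>G Mod F\<^esub> t'"
    proof -
      have "inv\<^bsub>G Mod F\<^esub> ?H \<otimes>\<^bsub>G Mod F\<^esub> ?Y \<otimes>\<^bsub>G Mod F\<^esub> inv\<^bsub>G Mod F\<^esub> (inv\<^bsub>G Mod F\<^esub> ?H) = F #> (inv h \<otimes> y \<otimes> inv (inv h))"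
        using piconj[OF inv_closed[OF hc] yc] piinv by simp
      also have "\<dots> = F #> (f' \<otimes> y [^] t')" using ft'(2) hc by simp
      also have "\<dots> = (F #> f') \<otimes>\<^bsub>G Mod F\<^esub> (F #> (y [^] t'))" using fc yc by simp
      also have "\<dots> = ?Y [^]\<^bsub>G Mod F\<^esub> t'" using piF[OF ft'(1)] pipow[of t'] yc Q.l_one[OF Q.int_pow_closed[OF Yc, of t']] by simp
      finally show ?thesis .
    qed
    have "?Y = inv\<^bsub>G Mod F\<^esub> ?H \<otimes>\<^bsub>G Mod F\<^esub> (?H \<otimes>\<^bsub>G Mod F\<^esub> ?Y \<otimes>\<^bsub>G Mod F\<^esub> inv\<^bsub>G Mod F\<^esub> ?H) \<otimes>\<^bsub>G Mod F\<^esub> ?H"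
      using Q.conj_uncancel[OF Hc Yc] by simp
    also have "\<dots> = inv\<^bsub>G Mod F\<^esub> ?H \<otimes>\<^bsub>G Mod F\<^esub> ?Y [^]\<^bsub>G Mod F\<^esub> t \<otimes>\<^bsub>G Mod F\<^esub> inv\<^bsub>G Mod F\<^esub> (inv\<^bsub>G Mod F\<^esub> ?H)"
      using e1 Hc by simp
    also have "\<dots> = (inv\<^bsub>G Mod F\<^esub> ?H \<otimes>\<^bsub>G Mod F\<^esub> ?Y \<otimes>\<^bsub>G Mod F\<^esub> inv\<^bsub>G Mod F\<^esub> (inv\<^bsub>G Mod F\<^esub> ?H)) [^]\<^bsub>G Mod F\<^esub> t"
      using Q.conj_pow[OF Q.inv_closed[OF Hc] Yc] by simp
    also have "\<dots> = ?Y [^]\<^bsub>G Mod F\<^esub> (t' * t)" using e2 Yc by (simp add: Q.int_pow_pow)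
    finally have Yeq: "?Y = ?Y [^]\<^bsub>G Mod F\<^esub> (t' * t)" .
    have "?Y [^]\<^bsub>G Mod F\<^esub> (t' * t - 1) = \<one>\<^bsub>G Mod F\<^esub>"
      using Q.int_pow_diff[OF Yc, of "t' * t" 1] Yeq[symmetric] Yc Q.r_inv[OF Yc] by simp
    then have "F #> (y [^] (t' * t - 1)) = \<one>\<^bsub>G Mod F\<^esub>" using pipow by simp
    then have yF: "y [^] (t' * t - 1) \<in> F" using pi_one yc by simp
    obtain n :: nat where n: "n > 0" "(y [^] (t' * t - 1)) [^] n = \<one>"
      using fin_closed_pow[OF Ffin Fc _ yF] subgroup.m_closed[OF Fsub] by blast
    have "y [^] ((t' * t - 1) * int n) = \<one>" using n(2) yc by (simp add: int_pow_pow int_pow_int[symmetric])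
    then have "(t' * t - 1) * int n = 0" using yinf unfolding inford_def by blast
    then have "t * t' = 1" using n(1) by (simp add: mult.commute)
    then have tpm: "t = 1 \<or> t = -1" by (rule pos_zmult_eq_1_iff_lemma)
    have e4: "F #> (h \<otimes> y' \<otimes> inv h) = F #> (y' [^] t)"
    proof -
      have "h \<otimes> y' \<otimes> inv h = (h \<otimes> y \<otimes> inv h) [^] (int p)" unfolding y'_def using conj_pow[OF hc yc] by simp
      then have "F #> (h \<otimes> y' \<otimes> inv h) = (F #> (h \<otimes> y \<otimes> inv h)) [^]\<^bsub>G Mod F\<^esub> (int p)"
        using pi.hom_int_pow[of "h \<otimes> y \<otimes> inv h" "int p"] hc yc by simp
      also have "\<dots> = (?Y [^]\<^bsub>G Mod F\<^esub> t) [^]\<^bsub>G Mod F\<^esub> (int p)" using e1 piconj[OF hc yc] by simp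
      also have "\<dots> = ?Y [^]\<^bsub>G Mod F\<^esub> (int p * t)" using Yc by (simp add: Q.int_pow_pow mult.commute)
      also have "\<dots> = F #> (y' [^] t)" unfolding y'_def using pipow yc by (simp add: int_pow_pow)
      finally show ?thesis .
    qed
    define f1 where "f1 = (h \<otimes> y' \<otimes> inv h) \<otimes> inv (y' [^] t)"
    have f1F: "f1 \<in> F" unfolding f1_def using pi_eq[OF e4] hc y'c by simp
    have f1c: "f1 \<in> carrier G" using f1F Fc by blast
    have hy': "h \<otimes> y' \<otimes> inv h = f1 \<otimes> y' [^] t" unfolding f1_def using hc y'c by (simp add: m_assoc)
    have f1y: "f1 \<otimes> y' [^] t = y' [^] t \<otimes> f1" using comm_pow1[OF y'c f1c y'F[OF f1F], of t] by simp
    have hu: "h \<otimes> u \<otimes> inv h = u [^] t"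
    proof -
      have "h \<otimes> u \<otimes> inv h = (h \<otimes> y' \<otimes> inv h) [^] (int K)" unfolding u_def using conj_pow[OF hc y'c] by simp
      also have "\<dots> = (f1 \<otimes> y' [^] t) [^] (int K)" by (simp only: hy')
      also have "\<dots> = f1 [^] (int K) \<otimes> (y' [^] t) [^] (int K)"
        using int_pow_mult_distrib[OF f1y f1c] y'c by simp
      also have "\<dots> = (y' [^] t) [^] (int K)" using fK[OF f1F] y'c by simp
      also have "\<dots> = u [^] t" unfolding u_def using y'c by (simp add: int_pow_pow mult.commute)
      finally show ?thesis .
    qed
    show ?thesis using tpm
    proof
      assume "t = 1"
      then have "h \<otimes> u \<otimes> inv h = u" using hu uc by simp
      then show ?thesis using conj_move[OF hc uc] by simp
    next
      assume "t = -1"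
      then have "h \<otimes> u \<otimes> inv h = inv u" using hu uc by (simp add: int_pow_neg)
      then show ?thesis using no_inversion[OF SC NI hc uc uinf] by blast
    qed
  qed
  show ?thesis using uc uinf comm by blast
qed



lemma main_lemma:
  assumes SC: "\<And>H. subgroup H G \<Longrightarrow> \<not>(\<forall>x\<in>H. \<forall>y\<in>H. x \<otimes> y = y \<otimes> x) \<Longrightarrow> centralizer G H \<subseteq> H"
  and NI: "\<And>x. x \<in> carrier G \<Longrightarrow> x [^] (2::nat) = \<one> \<Longrightarrow> x = \<one>"
  and inf: "infinite (carrier G)" and ss: "supersoluble G"
  shows "\<forall>x\<in>carrier G. \<forall>y\<in>carrier G. x \<otimes> y = y \<otimes> x"
proof -
  obtain Hs :: "'a set list" where Hs: "Hs \<noteq> []" "hd Hs = {\<one>}" "last Hs = carrier G"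
    "\<And>i. i < length Hs \<Longrightarrow> Hs ! i \<lhd> G"
    "\<And>i. Suc i < length Hs \<Longrightarrow> Hs ! i \<subseteq> Hs ! Suc i \<and> cyclic_group ((G\<lparr>carrier := Hs ! Suc i\<rparr>) Mod (Hs ! i))"
    using ss unfolding supersoluble_def by blast
  show ?thesis
  proof (rule ccontr)
    assume "\<not> (\<forall>x\<in>carrier G. \<forall>y\<in>carrier G. x \<otimes> y = y \<otimes> x)"
    then obtain a0 b0 where ab0: "a0 \<in> carrier G" "b0 \<in> carrier G" "a0 \<otimes> b0 \<noteq> b0 \<otimes> a0" by blast
    obtain u where u: "u \<in> carrier G" "inford G u" "\<And>x. x \<in> carrier G \<Longrightarrow> u \<otimes> x = x \<otimes> u"
      using central_inford[OF SC NI inf Hs] by blast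
    define Zc where "Zc = {z \<in> carrier G. \<forall>x\<in>carrier G. z \<otimes> x = x \<otimes> z}"
    define L where "L = length Hs"
    have L0: "L > 0" using Hs(1) unfolding L_def by simp
    have h0: "Hs ! 0 = {\<one>}" using Hs(1,2) by (simp add: hd_conv_nth)
    have hL: "Hs ! (L - 1) = carrier G" using Hs(1,3) unfolding L_def by (simp add: last_conv_nth)
    have "a0 \<notin> Zc" using ab0 unfolding Zc_def by blast
    then have ex: "\<exists>j. j < L \<and> \<not> Hs ! j \<subseteq> Zc" using hL L0 ab0(1) by (intro exI[of _ "L - 1"]) auto
    define j where "j = (LEAST j. j < L \<and> \<not> Hs ! j \<subseteq> Zc)"
    have j: "j < L" "\<not> Hs ! j \<subseteq> Zc" using LeastI_ex[OF ex] unfolding j_def by auto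
    have below: "Hs ! k \<subseteq> Zc" if "k < j" for k
      using not_less_Least[OF that[unfolded j_def]] that j(1) unfolding j_def by auto
    have "Hs ! 0 \<subseteq> Zc" using h0 unfolding Zc_def by auto
    then have "j \<noteq> 0" using j(2) by auto
    then obtain j' where j': "j = Suc j'" by (cases j) auto
    define Z0 where "Z0 = Hs ! j'"
    define A where "A = Hs ! j"
    have Z0Zc: "Z0 \<subseteq> Zc" unfolding Z0_def using below[of j'] j' by simp
    have Z0n: "Z0 \<lhd> G" unfolding Z0_def using Hs(4)[of j'] j' j(1) unfolding L_def by simp
    have An: "A \<lhd> G" unfolding A_def using Hs(4)[of j] j(1) unfolding L_def by simp
    have Z0A: "Z0 \<subseteq> A" and cyc: "cyclic_group ((G\<lparr>carrier := A\<rparr>) Mod Z0)"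
      using Hs(5)[of j'] j' j(1) unfolding Z0_def A_def L_def by auto
    have Asub: "subgroup A G" using An normal_imp_subgroup by blast
    have Z0sub: "subgroup Z0 G" using Z0n normal_imp_subgroup by blast
    have Ac: "A \<subseteq> carrier G" using Asub subgroup.subset by blast
    have Z0cen: "z \<in> carrier G" "z \<otimes> x = x \<otimes> z" if "z \<in> Z0" "x \<in> carrier G" for z x
      using that Z0Zc unfolding Zc_def by auto
    obtain a where a: "a \<in> A" "\<And>n. n \<in> A \<Longrightarrow> \<exists>z\<in>Z0. \<exists>t::int. n = z \<otimes> a [^] t"
      using cyc_struct[OF Z0n Asub Z0A cyc] by blast
    have ac: "a \<in> carrier G" using a(1) Ac by blast
    have "a \<notin> Zc"
    proof
      assume aZ: "a \<in> Zc"
      have "A \<subseteq> Zc"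
      proof
        fix n assume "n \<in> A"
        then obtain z t where zt: "z \<in> Z0" "n = z \<otimes> a [^] (t::int)" using a(2) by blast
        have zc: "z \<in> carrier G" using Z0cen(1)[OF zt(1)] ac by blast
        have "n \<otimes> x = x \<otimes> n" if xc: "x \<in> carrier G" for x
        proof -
          have ax: "a \<otimes> x = x \<otimes> a" using aZ xc unfolding Zc_def by blast
          have "n \<otimes> x = z \<otimes> (a [^] t \<otimes> x)" using zt zc ac xc by (simp add: m_assoc)
          also have "\<dots> = z \<otimes> (x \<otimes> a [^] t)" using comm_pow1[OF ac xc ax, of t] by simp
          also have "\<dots> = (z \<otimes> x) \<otimes> a [^] t" using zc ac xc by (simp add: m_assoc)
          also have "\<dots> = (x \<otimes> z) \<otimes> a [^] t" using Z0cen(2)[OF zt(1) xc] by simp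
          also have "\<dots> = x \<otimes> n" using zt zc ac xc by (simp add: m_assoc)
          finally show ?thesis .
        qed
        moreover have "n \<in> carrier G" using zt zc ac by simp
        ultimately show "n \<in> Zc" unfolding Zc_def by blast
      qed
      then show False using j(2) unfolding A_def by blast
    qed
    then have "\<not> (\<forall>x\<in>carrier G. a \<otimes> x = x \<otimes> a)" using ac unfolding Zc_def by blast
    then obtain b where b1: "b \<in> carrier G" "a \<otimes> b \<noteq> b \<otimes> a" by blast
    have b: "b \<in> carrier G" "b \<otimes> a \<noteq> a \<otimes> b" using b1 by (auto simp: eq_commute)
    have "b \<otimes> a \<otimes> inv b \<in> A" using normal.inv_op_closed2[OF An b(1) a(1)] .
    then obtain z k where zk: "z \<in> Z0" "b \<otimes> a \<otimes> inv b = z \<otimes> a [^] (k::int)" using a(2) by blast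
    have zc: "z \<in> carrier G" using zk(1) Z0cen(1) ac by blast
    have zcomm: "z \<otimes> x = x \<otimes> z" if "x \<in> carrier G" for x using Z0cen(2)[OF zk(1) that] .
    define d where "d = z \<otimes> a [^] (k - 1)"
    have dc: "d \<in> carrier G" unfolding d_def using zc ac by simp
    have d_eq: "d = inv a \<otimes> (b \<otimes> a \<otimes> inv b)"
    proof -
      have "inv a \<otimes> (b \<otimes> a \<otimes> inv b) = inv a \<otimes> (z \<otimes> a [^] k)" using zk(2) by simp
      also have "\<dots> = z \<otimes> (inv a \<otimes> a [^] k)"
        using zcomm[OF inv_closed[OF ac]] zc ac by (simp add: m_assoc[symmetric])
      also have "\<dots> = z \<otimes> a [^] (k - 1)"
      proof -
        have "a [^] (k - 1) = a [^] (- 1 + k)" by simp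
        also have "\<dots> = a [^] (- 1::int) \<otimes> a [^] k" by (rule int_pow_mult[OF ac])
        also have "\<dots> = inv a \<otimes> a [^] k" using ac by (simp add: int_pow_neg)
        finally show ?thesis by simp
      qed
      finally show ?thesis unfolding d_def by simp
    qed
    have ba: "b \<otimes> a = a \<otimes> d \<otimes> b"
    proof -
      have "a \<otimes> d \<otimes> b = a \<otimes> (inv a \<otimes> (b \<otimes> a \<otimes> inv b)) \<otimes> b" unfolding d_eq by simp
      also have "\<dots> = b \<otimes> a" using ac b(1) by (simp add: m_assoc)
      finally show ?thesis by simp
    qed
    have ad: "a \<otimes> d = d \<otimes> a"
    proof -
      have "a \<otimes> d = (a \<otimes> z) \<otimes> a [^] (k - 1)" unfolding d_def using ac zc by (simp add: m_assoc)
      also have "\<dots> = (z \<otimes> a) \<otimes> a [^] (k - 1)" by (simp only: zcomm[OF ac, symmetric])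
      also have "\<dots> = z \<otimes> (a \<otimes> a [^] (k - 1))" using ac zc by (simp add: m_assoc)
      also have "\<dots> = z \<otimes> (a [^] (k - 1) \<otimes> a)" using comm_pow1[OF ac ac refl, of "k - 1"] by simp
      also have "\<dots> = d \<otimes> a" unfolding d_def using ac zc by (simp add: m_assoc)
      finally show ?thesis .
    qed
    have d1: "d \<noteq> \<one>"
    proof
      assume "d = \<one>"
      then have "b \<otimes> a = a \<otimes> b" using ba ac b(1) by simp
      then show False using b(2) by simp
    qed
    have za: "z \<otimes> a = a \<otimes> z" using zcomm[OF ac] .
    have bdk: "b \<otimes> d \<otimes> inv b = d [^] k"
    proof -
      have "b \<otimes> d \<otimes> inv b = z \<otimes> (b \<otimes> a [^] (k - 1) \<otimes> inv b)"
        unfolding d_def using zcomm[OF b(1)] zc ac b(1) by (simp add: m_assoc[symmetric])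
      also have "\<dots> = z \<otimes> (b \<otimes> a \<otimes> inv b) [^] (k - 1)" using conj_pow[OF b(1) ac] by simp
      also have "\<dots> = z \<otimes> (z [^] (1::int) \<otimes> a [^] k) [^] (k - 1)" using zk(2) zc by simp
      also have "\<dots> = z \<otimes> (z [^] (1 * (k - 1)) \<otimes> a [^] (k * (k - 1)))" using pow_prod[OF zc ac za] by simp
      also have "\<dots> = z [^] (1 + (k - 1)) \<otimes> a [^] (k * (k - 1))"
      proof -
        have zz: "z \<otimes> z [^] (k - 1) = z [^] (1 + (k - 1))" using int_pow_mult[OF zc, of 1 "k - 1"] zc by simp
        show ?thesis using zc ac by (simp add: m_assoc[symmetric] zz)
      qed
      also have "\<dots> = z [^] (1 * k) \<otimes> a [^] ((k - 1) * k)" by (simp add: mult.commute)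
      also have "\<dots> = (z [^] (1::int) \<otimes> a [^] (k - 1)) [^] k" using pow_prod[OF zc ac za] by simp
      also have "\<dots> = d [^] k" unfolding d_def using zc by simp
      finally show ?thesis .
    qed
    show False
    proof (cases "b \<otimes> d = d \<otimes> b")
      case True
      show False by (rule heis[OF SC u ac b(1) dc ba ad True d1])
    next
      case bd: False
      show False
      proof (cases "inford G d")
        case dinf: False
        define F where "F = {d [^] (x::int) \<otimes> d [^] (z::int) | x z. True}"
        have Fsub: "subgroup F G" unfolding F_def by (rule absub[OF dc dc refl])
        have Ffin: "finite F" unfolding F_def by (rule absub_finite[OF dc dc dinf dinf])
        show False
        proof (rule gp[OF SC u Fsub Ffin b(1)])
          show "b \<otimes> f \<otimes> inv b \<in> F" if fF: "f \<in> F" for f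
          proof -
            obtain x y :: int where f: "f = d [^] x \<otimes> d [^] y" using fF unfolding F_def by blast
            have "b \<otimes> f \<otimes> inv b = (b \<otimes> d [^] x \<otimes> inv b) \<otimes> (b \<otimes> d [^] y \<otimes> inv b)"
              unfolding f using b(1) dc by (simp add: m_assoc)
            also have "\<dots> = (d [^] k) [^] x \<otimes> (d [^] k) [^] y" using conj_pow[OF b(1) dc] bdk by simp
            also have "\<dots> = d [^] (k * x) \<otimes> d [^] (k * y)" using dc by (simp add: int_pow_pow)
            finally show ?thesis unfolding F_def by blast
          qed
          have "d = d [^] (1::int) \<otimes> d [^] (0::int)" using dc by simp
          then show "d \<in> F" unfolding F_def by blast
          show "b \<otimes> d \<noteq> d \<otimes> b" by (rule bd)
        qed
      next
        case dinf: True
        have alpha: "n = 0" if "a [^] (n::int) \<in> Z0" for n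
        proof -
          have an: "a [^] n \<in> carrier G" using ac by simp
          have cm: "b \<otimes> a [^] n = a [^] n \<otimes> b" using Z0cen(2)[OF that b(1)] by simp
          have "b \<otimes> a [^] n \<otimes> inv b = (a [^] n \<otimes> b) \<otimes> inv b" by (simp only: cm)
          also have "\<dots> = a [^] n" using an b(1) by (simp add: m_assoc)
          finally have "b \<otimes> a [^] n \<otimes> inv b = a [^] n" .
          moreover have "b \<otimes> a [^] n \<otimes> inv b = (a \<otimes> d) [^] n"
          proof -
            have "b \<otimes> a \<otimes> inv b = a \<otimes> d" using ba ac dc b(1) by (simp add: m_assoc)
            then show ?thesis using conj_pow[OF b(1) ac, of n] by simp
          qed
          moreover have "(a \<otimes> d) [^] n = a [^] n \<otimes> d [^] n" by (rule int_pow_mult_distrib[OF ad ac dc])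
          ultimately have "a [^] n \<otimes> d [^] n = a [^] n" by simp
          then have "d [^] n = \<one>" using an dc by simp
          then show ?thesis using dinf unfolding inford_def by blast
        qed
        have "inv b \<otimes> a \<otimes> inv (inv b) \<in> A" using normal.inv_op_closed2[OF An inv_closed[OF b(1)] a(1)] .
        then obtain z' k' where zk': "z' \<in> Z0" "inv b \<otimes> a \<otimes> inv (inv b) = z' \<otimes> a [^] (k'::int)" using a(2) by blast
        have z'c: "z' \<in> carrier G" using zk'(1) Z0cen(1) ac by blast
        have z'a: "z' \<otimes> a = a \<otimes> z'" using Z0cen(2)[OF zk'(1) ac] .
        have "a = inv b \<otimes> (b \<otimes> a \<otimes> inv b) \<otimes> inv (inv b)" using ac b(1) by (simp add: m_assoc)
        also have "\<dots> = inv b \<otimes> (z \<otimes> a [^] k) \<otimes> inv (inv b)" using zk(2) by simp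
        also have "\<dots> = z \<otimes> (inv b \<otimes> a [^] k \<otimes> inv (inv b))"
          using zcomm[OF inv_closed[OF b(1)]] zc ac b(1) by (simp add: m_assoc[symmetric])
        also have "\<dots> = z \<otimes> (z' [^] (1::int) \<otimes> a [^] k') [^] k"
          using conj_pow[OF inv_closed[OF b(1)] ac, of k] zk'(2) z'c by simp
        also have "\<dots> = z \<otimes> (z' [^] (1 * k) \<otimes> a [^] (k' * k))" using pow_prod[OF z'c ac z'a] by simp
        also have "\<dots> = (z \<otimes> z' [^] k) \<otimes> a [^] (k' * k)" using zc z'c ac by (simp add: m_assoc)
        finally have aeq: "a = (z \<otimes> z' [^] k) \<otimes> a [^] (k' * k)" .
        have wZ: "z \<otimes> z' [^] k \<in> Z0"
          using subgroup.m_closed[OF Z0sub zk(1) subgroup_int_pow_closed[OF Z0sub zk'(1)]] .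
        have wc: "z \<otimes> z' [^] k \<in> carrier G" using zc z'c by simp
        have "a [^] (k' * k - 1) = a [^] (k' * k) \<otimes> inv a" using int_pow_diff[OF ac, of "k' * k" 1] ac by simp
        also have "\<dots> = inv (z \<otimes> z' [^] k)"
        proof -
          have "a [^] (k' * k) \<otimes> inv a = a [^] (k' * k) \<otimes> inv ((z \<otimes> z' [^] k) \<otimes> a [^] (k' * k))"
            using aeq by simp
          also have "\<dots> = inv (z \<otimes> z' [^] k)" using wc ac by (simp add: inv_mult_group)
          finally show ?thesis .
        qed
        finally have "a [^] (k' * k - 1) \<in> Z0" using subgroup.m_inv_closed[OF Z0sub wZ] by simp
        then have "k' * k - 1 = 0" by (rule alpha)
        then have "k * k' = 1" by (simp add: mult.commute)
        then have "k = 1 \<or> k = -1" by (rule pos_zmult_eq_1_iff_lemma)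
        then show False
        proof
          assume "k = 1"
          then have "b \<otimes> d \<otimes> inv b = d" using bdk dc by simp
          then have "b \<otimes> d = d \<otimes> b" using conj_move[OF b(1) dc] by simp
          then show False using bd by simp
        next
          assume "k = -1"
          then have "b \<otimes> d \<otimes> inv b = inv d" using bdk dc by (simp add: int_pow_neg)
          then show False using no_inversion[OF SC NI b(1) dc dinf] by blast
        qed
      qed
    qed
  qed
qed

end

theorem theorem4p1:
  fixes G :: "('a, 'b) monoid_scheme"
  assumes "group G"
    and "infinite (carrier G)"
    and "supersoluble G"
    and "\<forall>x \<in> carrier G. x [^]\<^bsub>G\<^esub> (2::nat) = \<one>\<^bsub>G\<^esub> \<longrightarrow> x = \<one>\<^bsub>G\<^esub>"
    and "\<forall>H. subgroup H G \<and> \<not> (\<forall>x\<in>H. \<forall>y\<in>H. x \<otimes>\<^bsub>G\<^esub> y = y \<otimes>\<^bsub>G\<^esub> x)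
               \<longrightarrow> centralizer G H \<subseteq> H"
  shows "comm_group G"
proof -
  have allcomm: "\<forall>x\<in>carrier G. \<forall>y\<in>carrier G. x \<otimes>\<^bsub>G\<^esub> y = y \<otimes>\<^bsub>G\<^esub> x"
    by (rule group.main_lemma[OF assms(1)]) (use assms in blast)+
  show ?thesis by (rule group.group_comm_groupI[OF assms(1)]) (use allcomm in blast)
qed

end
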